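(* Let $E$ be the elliptic curve over $\mathbb{Q}$ given by $y^2 = x^3+x^2+x+1$, and let $\rho_{E,4}\colon \mathrm{Gal}(\overline{\mathbb{Q}}/\mathbb{Q}) \to \mathrm{GL}_2(\mathbb{Z}/4\mathbb{Z})$ be the representation on its $4$-torsion $E[4]$. Then $\rho_{E,4} \cong \rho$, where $\rho$ is defined as follows: let $K := \mathbb{Q}(i,\sqrt2,\sqrt{1+i})$, a Galois extension of $\mathbb{Q}$, identify $\mathrm{Gal}(K/\mathbb{Q})$ with $D_4 = \langle r,s \mid r^4=s^2=1,\ srs=r^{-1}\rangle$ via the automorphisms $r,s$ determined by $s(i)=i$, $s(\sqrt2)=-\sqrt2$, $s(\sqrt{1+i})=\sqrt{1+i}$, $r(i)=-i$, $r(\sqrt2)=-\sqrt2$, $r(\sqrt{1+i}) = \frac{1-i}{\sqrt2}\sqrt{1+i}$, and let $\rho$ be the composite of the natural surjection $\mathrm{Gal}(\overline{\mathbb{Q}}/\mathbb{Q}) \twoheadrightarrow \mathrm{Gal}(K/\mathbb{Q}) \cong D_4$ with the embedding $D_4 \hookrightarrow \mathrm{GL}_2(\mathbb{Z}/4\mathbb{Z})$ given by $r \mapsto \begin{pmatrix}1&2\\1&1\end{pmatrix}$, $s \mapsto \begin{pmatrix}-1&2\\2&-1\end{pmatrix}$. *)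

theory Defs
  imports Complex_Main "HOL-Computational_Algebra.Polynomial"
begin

text \<open>Points: None is the point at infinity O, Some (x,y) an affine point.\<close>
type_synonym ept = "(complex \<times> complex) option"

definition on_E :: "ept \<Rightarrow> bool" where
  "on_E P = (case P of None \<Rightarrow> True
     | Some (x, y) \<Rightarrow> y^2 = x^3 + x^2 + x + 1)"

text \<open>Chord-tangent group law for y^2 = x^3 + a2 x^2 + a4 x + a6 with a2 = a4 = a6 = 1.\<close>
definition E_add :: "ept \<Rightarrow> ept \<Rightarrow> ept" where
  "E_add P Q = (case P of None \<Rightarrow> Q | Some (x1, y1) \<Rightarrow>
     (case Q of None \<Rightarrow> P | Some (x2, y2) \<Rightarrow>
       (if x1 = x2 \<and> y1 = - y2 then None
        else let l = (if x1 \<noteq> x2 then (y2 - y1) / (x2 - x1)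
                      else (3 * x1^2 + 2 * x1 + 1) / (2 * y1));
                 x3 = l^2 - 1 - x1 - x2;
                 y3 = - (l * (x3 - x1) + y1)
             in Some (x3, y3))))"

definition E_smul :: "nat \<Rightarrow> ept \<Rightarrow> ept" where
  "E_smul n P = ((E_add P) ^^ n) None"

text \<open>Integer multiples, used for coefficients in Z/4Z (4-torsion points only).\<close>
definition E_ismul :: "int \<Rightarrow> ept \<Rightarrow> ept" where
  "E_ismul k P = E_smul (nat (k mod 4)) P"

definition E4 :: "ept set" where
  "E4 = {P. on_E P \<and> E_smul 4 P = None}"

definition E4_basis :: "ept \<Rightarrow> ept \<Rightarrow> bool" where
  "E4_basis P Q = (P \<in> E4 \<and> Q \<in> E4 \<and>
     bij_betw (\<lambda>(a, b). E_add (E_smul a P) (E_smul b Q)) ({0..<4} \<times> {0..<4}) E4)"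

definition Qbar :: "complex set" where
  "Qbar = {z. algebraic z}"

definition Qbar_aut :: "(complex \<Rightarrow> complex) \<Rightarrow> bool" where
  "Qbar_aut \<sigma> = (bij_betw \<sigma> Qbar Qbar \<and>
     (\<forall>x\<in>Qbar. \<forall>y\<in>Qbar. \<sigma> (x + y) = \<sigma> x + \<sigma> y \<and> \<sigma> (x * y) = \<sigma> x * \<sigma> y))"

definition pt_act :: "(complex \<Rightarrow> complex) \<Rightarrow> ept \<Rightarrow> ept" where
  "pt_act \<sigma> P = map_option (\<lambda>(x, y). (\<sigma> x, \<sigma> y)) P"

definition is_subfield :: "complex set \<Rightarrow> bool" where
  "is_subfield F = (0 \<in> F \<and> 1 \<in> F \<and>
     (\<forall>x\<in>F. \<forall>y\<in>F. x + y \<in> F \<and> x - y \<in> F \<and> x * y \<in> F) \<and>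
     (\<forall>x\<in>F. x \<noteq> 0 \<longrightarrow> inverse x \<in> F))"

definition sqrt2 :: complex where "sqrt2 = complex_of_real (sqrt 2)"
definition alpha :: complex where "alpha = csqrt (1 + \<i>)"

definition K :: "complex set" where
  "K = \<Inter> {F. is_subfield F \<and> \<i> \<in> F \<and> sqrt2 \<in> F \<and> alpha \<in> F}"

definition K_aut :: "(complex \<Rightarrow> complex) \<Rightarrow> bool" where
  "K_aut \<tau> = (bij_betw \<tau> K K \<and>
     (\<forall>x\<in>K. \<forall>y\<in>K. \<tau> (x + y) = \<tau> x + \<tau> y \<and> \<tau> (x * y) = \<tau> x * \<tau> y))"

definition D4_gens :: "(complex \<Rightarrow> complex) \<Rightarrow> (complex \<Rightarrow> complex) \<Rightarrow> bool" where
  "D4_gens r s = (K_aut r \<and> K_aut s \<and>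
     s \<i> = \<i> \<and> s sqrt2 = - sqrt2 \<and> s alpha = alpha \<and>
     r \<i> = - \<i> \<and> r sqrt2 = - sqrt2 \<and> r alpha = (1 - \<i>) / sqrt2 * alpha)"

section \<open>2x2 integer matrices (entries read modulo 4)\<close>

type_synonym mat2 = "int \<times> int \<times> int \<times> int"  \<comment> \<open>(m11, m12, m21, m22)\<close>

definition mat2_mult :: "mat2 \<Rightarrow> mat2 \<Rightarrow> mat2" where
  "mat2_mult A B = (case A of (a11, a12, a21, a22) \<Rightarrow> case B of (b11, b12, b21, b22) \<Rightarrow>
     (a11*b11 + a12*b21, a11*b12 + a12*b22, a21*b11 + a22*b21, a21*b12 + a22*b22))"

definition mat2_id :: mat2 where "mat2_id = (1, 0, 0, 1)"

definition mat2_pow :: "mat2 \<Rightarrow> nat \<Rightarrow> mat2" where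
  "mat2_pow A n = (mat2_mult A ^^ n) mat2_id"

definition rho_r :: mat2 where "rho_r = (1, 2, 1, 1)"
definition rho_s :: mat2 where "rho_s = (-1, 2, 2, -1)"

text \<open>sigma acts on the basis (P, Q) by the matrix M (column convention):
  sigma(P) = m11 P + m21 Q,  sigma(Q) = m12 P + m22 Q.\<close>
definition acts_by :: "(complex \<Rightarrow> complex) \<Rightarrow> ept \<Rightarrow> ept \<Rightarrow> mat2 \<Rightarrow> bool" where
  "acts_by \<sigma> P Q M = (case M of (m11, m12, m21, m22) \<Rightarrow>
     pt_act \<sigma> P = E_add (E_ismul m11 P) (E_ismul m21 Q) \<and>
     pt_act \<sigma> Q = E_add (E_ismul m12 P) (E_ismul m22 Q))"

end

theory Submission
  imports Defs
begin

lemma rat_sq_ne2: "(r::rat) * r \<noteq> 2"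
proof
  assume h: "r * r = 2"
  obtain a b where q: "quotient_of r = (a, b)" by (cases "quotient_of r")
  have b0: "b > 0" using quotient_of_denom_pos[OF q] .
  have cop: "coprime a b" using quotient_of_coprime[OF q] .
  have r: "r = of_int a / of_int b" using quotient_of_div[OF q] .
  have "of_int a * of_int a = (2::rat) * (of_int b * of_int b)"
    using h b0 unfolding r by (simp add: field_simps)
  hence e: "a * a = 2 * (b * b)" by (metis (mono_tags) of_int_eq_iff of_int_mult of_int_numeral)
  hence "even (a*a)" by simp
  hence ea: "even a" by simp
  then obtain c where "a = 2 * c" by blast
  with e have "b * b = 2 * (c * c)" by simp
  hence "even (b*b)" by simp
  hence "even b" by simp
  with ea cop show False by (meson coprime_common_divisor not_coprimeI odd_one)
qed


type_synonym q1 = "rat \<times> rat"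
type_synonym q2 = "q1 \<times> q1"
type_synonym q3 = "q2 \<times> q2"

fun ev1 :: "complex \<Rightarrow> q1 \<Rightarrow> complex" where
  "ev1 u (p, q) = of_rat p + of_rat q * u"
fun ev2 :: "complex \<Rightarrow> complex \<Rightarrow> q2 \<Rightarrow> complex" where
  "ev2 u v (x, y) = ev1 u x + ev1 u y * v"
fun ev3 :: "complex \<Rightarrow> complex \<Rightarrow> complex \<Rightarrow> q3 \<Rightarrow> complex" where
  "ev3 u v w (x, y) = ev2 u v x + ev2 u v y * w"

fun add1 :: "q1 \<Rightarrow> q1 \<Rightarrow> q1" where "add1 (p,q) (p',q') = (p+p', q+q')"
fun neg1 :: "q1 \<Rightarrow> q1" where "neg1 (p,q) = (-p, -q)"
fun mul1 :: "q1 \<Rightarrow> q1 \<Rightarrow> q1" where "mul1 (p,q) (p',q') = (p*p' - q*q', p*q' + q*p')"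
fun add2 :: "q2 \<Rightarrow> q2 \<Rightarrow> q2" where "add2 (x,y) (x',y') = (add1 x x', add1 y y')"
fun neg2 :: "q2 \<Rightarrow> q2" where "neg2 (x,y) = (neg1 x, neg1 y)"
fun mul2 :: "q2 \<Rightarrow> q2 \<Rightarrow> q2" where
  "mul2 (x,y) (x',y') = (add1 (mul1 x x') (mul1 (2,0) (mul1 y y')), add1 (mul1 x y') (mul1 y x'))"
fun add3 :: "q3 \<Rightarrow> q3 \<Rightarrow> q3" where "add3 (x,y) (x',y') = (add2 x x', add2 y y')"
fun neg3 :: "q3 \<Rightarrow> q3" where "neg3 (x,y) = (neg2 x, neg2 y)"
fun mul3 :: "q3 \<Rightarrow> q3 \<Rightarrow> q3" where
  "mul3 (x,y) (x',y') = (add2 (mul2 x x') (mul2 ((1,1),(0,0)) (mul2 y y')), add2 (mul2 x y') (mul2 y x'))"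

definition sub3 :: "q3 \<Rightarrow> q3 \<Rightarrow> q3" where "sub3 a b = add3 a (neg3 b)"
definition rc3 :: "rat \<Rightarrow> q3" where "rc3 c = (((c,0),(0,0)),((0,0),(0,0)))"

lemma ev1_add: "ev1 u (add1 a b) = ev1 u a + ev1 u b"
  by (cases a; cases b) (simp add: of_rat_add algebra_simps)
lemma ev1_neg: "ev1 u (neg1 a) = - ev1 u a"
  by (cases a) (simp add: of_rat_minus algebra_simps)
lemma ev1_mul: assumes "u*u = -1" shows "ev1 u (mul1 a b) = ev1 u a * ev1 u b"
proof (cases a; cases b)
  fix p q p' q' assume [simp]: "a = (p,q)" "b = (p',q')"
  have "ev1 u a * ev1 u b = of_rat p * of_rat p' + of_rat q * of_rat q' * (u*u) + (of_rat p * of_rat q' + of_rat q * of_rat p') * u"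
    by (simp add: algebra_simps)
  thus ?thesis using assms by (simp add: of_rat_add of_rat_mult of_rat_diff algebra_simps)
qed
lemma ev2_add: "ev2 u v (add2 a b) = ev2 u v a + ev2 u v b"
  by (cases a; cases b) (simp add: ev1_add of_rat_add algebra_simps)
lemma ev2_neg: "ev2 u v (neg2 a) = - ev2 u v a"
  by (cases a) (simp add: ev1_neg of_rat_minus algebra_simps)
lemma ev2_mul: assumes "u*u = -1" "v*v = 2" shows "ev2 u v (mul2 a b) = ev2 u v a * ev2 u v b"
proof (cases a; cases b)
  fix x y x' y' assume [simp]: "a = (x,y)" "b = (x',y')"
  have "ev2 u v a * ev2 u v b = ev1 u x * ev1 u x' + ev1 u y * ev1 u y' * (v*v) + (ev1 u x * ev1 u y' + ev1 u y * ev1 u x') * v"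
    by (simp add: algebra_simps)
  thus ?thesis using assms by (simp add: ev1_add ev1_mul algebra_simps)
qed
lemma ev3_add: "ev3 u v w (add3 a b) = ev3 u v w a + ev3 u v w b"
  by (cases a; cases b) (simp add: ev2_add ev1_add of_rat_add algebra_simps)
lemma ev3_neg: "ev3 u v w (neg3 a) = - ev3 u v w a"
  by (cases a) (simp add: ev2_neg ev1_neg of_rat_minus algebra_simps)
lemma ev3_sub: "ev3 u v w (sub3 a b) = ev3 u v w a - ev3 u v w b"
  by (simp add: sub3_def ev3_add ev3_neg)
lemma ev3_rc: "ev3 u v w (rc3 c) = of_rat c"
  by (simp add: rc3_def)
lemma ev3_mul: assumes "u*u = -1" "v*v = 2" "w*w = 1+u" shows "ev3 u v w (mul3 a b) = ev3 u v w a * ev3 u v w b"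
proof (cases a; cases b)
  fix x y x' y' assume [simp]: "a = (x,y)" "b = (x',y')"
  have "ev3 u v w a * ev3 u v w b = ev2 u v x * ev2 u v x' + ev2 u v y * ev2 u v y' * (w*w) + (ev2 u v x * ev2 u v y' + ev2 u v y * ev2 u v x') * w"
    by (simp add: algebra_simps)
  thus ?thesis using assms by (simp add: ev2_add ev2_mul algebra_simps)
qed


abbreviation "e1 \<equiv> ev1 \<i>"
abbreviation "e2 \<equiv> ev2 \<i> sqrt2"
abbreviation "e3 \<equiv> ev3 \<i> sqrt2 alpha"

lemma ii_sq: "\<i> * \<i> = -1" by simp
lemma sqrt2_sq: "sqrt2 * sqrt2 = 2"
  unfolding sqrt2_def by (simp flip: of_real_mult)
lemma alpha_sq: "alpha * alpha = 1 + \<i>"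
  unfolding alpha_def by (simp flip: power2_eq_square)

lemmas e3_mul = ev3_mul[OF ii_sq sqrt2_sq alpha_sq]
lemmas e2_mul = ev2_mul[OF ii_sq sqrt2_sq]
lemmas e1_mul = ev1_mul[OF ii_sq]

lemma c_of_rat: "(of_rat p :: complex) = of_real (of_rat p)"
  by (cases p) (simp add: of_rat_rat)
lemma Re_of_rat[simp]: "Re (of_rat p) = of_rat p" by (subst c_of_rat) simp
lemma Im_of_rat[simp]: "Im (of_rat p) = 0" by (subst c_of_rat) simp

lemma e1_zero: assumes "e1 a = 0" shows "a = (0,0)"
proof (cases a)
  case (Pair p q)
  have "Re (e1 a) = of_rat p" "Im (e1 a) = of_rat q" using Pair
    by simp_all
  moreover have "Re (e1 a) = 0" "Im (e1 a) = 0" using assms by simp_all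
  ultimately show ?thesis using Pair by simp
qed

lemma real_sqrt2_indep: assumes "of_rat a + of_rat b * sqrt 2 = (0::real)" shows "a = 0 \<and> b = 0"
proof (cases "b = 0")
  case True thus ?thesis using assms by simp
next
  case False
  hence h: "of_rat (- a / b) = sqrt 2" using assms by (simp add: of_rat_divide of_rat_minus field_simps)
  have "of_rat ((- a / b) * (- a / b)) = sqrt 2 * sqrt 2" by (simp only: of_rat_mult h)
  hence "of_rat ((- a / b) * (- a / b)) = (of_rat 2::real)" by simp
  hence "(- a / b) * (- a / b) = 2" by (simp only: of_rat_eq_iff)
  thus ?thesis using rat_sq_ne2 by blast
qed

lemma e2_zero: assumes "e2 a = 0" shows "a = ((0,0),(0,0))"
proof -
  obtain p q p' q' where a: "a = ((p,q),(p',q'))" by (metis prod.exhaust)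
  have "Re (e2 a) = of_rat p + of_rat p' * sqrt 2" "Im (e2 a) = of_rat q + of_rat q' * sqrt 2" using a
    by (simp_all add: sqrt2_def)
  moreover have "Re (e2 a) = 0" "Im (e2 a) = 0" using assms by simp_all
  ultimately have "of_rat p + of_rat p' * sqrt 2 = (0::real)" "of_rat q + of_rat q' * sqrt 2 = (0::real)" by simp_all
  from real_sqrt2_indep[OF this(1)] real_sqrt2_indep[OF this(2)] show ?thesis using a by simp
qed

lemma e1_inj: "e1 a = e1 b \<Longrightarrow> a = b"
proof -
  assume "e1 a = e1 b"
  hence "e1 (add1 a (neg1 b)) = 0" by (simp add: ev1_add ev1_neg)
  hence "add1 a (neg1 b) = (0,0)" by (rule e1_zero)
  thus ?thesis by (cases a; cases b) auto
qed

lemma e2_inj: "e2 a = e2 b \<Longrightarrow> a = b"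
proof -
  assume "e2 a = e2 b"
  hence "e2 (add2 a (neg2 b)) = 0" by (simp add: ev2_add ev2_neg)
  hence "add2 a (neg2 b) = ((0,0),(0,0))" by (rule e2_zero)
  thus ?thesis by (cases a; cases b) auto
qed

definition "Q1 = range e1"
definition "L2 = range e2"
definition "K3 = range e3"

lemma Q1_inv: assumes "z \<in> Q1" shows "inverse z \<in> Q1"
proof -
  obtain p q where z: "z = e1 (p,q)" using assms unfolding Q1_def by auto
  show ?thesis
  proof (cases "p*p + q*q = 0")
    case True
    hence "p = 0 \<and> q = 0" by (simp add: sum_squares_eq_zero_iff)
    thus ?thesis using z unfolding Q1_def by (auto intro!: range_eqI[of _ _ "(0,0)"])
  next
    case False
    have ne: "(of_rat p)^2 + (of_rat q)^2 \<noteq> (0::complex)"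
      using False unfolding power2_eq_square of_rat_mult[symmetric] of_rat_add[symmetric] of_rat_eq_0_iff .
    have "inverse z = e1 (p/(p*p+q*q), - q / (p*p+q*q))"
    proof -
      have ne': "of_rat p * of_rat p + of_rat q * of_rat q \<noteq> (0::complex)" using ne by (simp add: power2_eq_square)
      have D: "of_rat (p*p+q*q) \<noteq> (0::complex)" using False by simp
      have w: "e1 (p/(p*p+q*q), - q / (p*p+q*q)) = (of_rat p - of_rat q * \<i>) / of_rat (p*p+q*q)"
        by (simp add: of_rat_divide of_rat_minus diff_divide_distrib)
      have zz: "z * (of_rat p - of_rat q * \<i>) = of_rat (p*p+q*q)"
        by (simp add: z of_rat_add of_rat_mult algebra_simps)
      have "z * e1 (p/(p*p+q*q), - q / (p*p+q*q)) = 1"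
        unfolding w using D zz by (simp add: field_simps)
      thus ?thesis by (rule inverse_unique)
    qed
    thus ?thesis unfolding Q1_def by (metis rangeI)
  qed
qed

lemma two_not_sq_Q1: assumes "w \<in> Q1" shows "w * w \<noteq> 2"
proof
  assume h: "w * w = 2"
  obtain p q where w: "w = e1 (p,q)" using assms unfolding Q1_def by auto
  have "e1 (mul1 (p,q) (p,q)) = e1 (2,0)" using h w by (simp only: e1_mul) simp
  hence "mul1 (p,q) (p,q) = (2,0)" by (rule e1_inj)
  hence eq: "p*p - q*q = 2" "p*q + q*p = 0" by auto
  show False
  proof (cases "p = 0")
    case True
    have "- (q*q) = 2" using eq True by simp
    moreover have "0 \<le> q*q" by simp
    ultimately show False by linarith
  next
    case False hence "q = 0" using eq by auto
    thus False using eq rat_sq_ne2 by auto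
  qed
qed


lemma Q1_add: assumes "a \<in> Q1" "b \<in> Q1" shows "a + b \<in> Q1"
proof -
  obtain x y where "a = e1 x" "b = e1 y" using assms unfolding Q1_def by auto
  thus ?thesis unfolding Q1_def using rangeI[of e1 "add1 x y"] by (simp add: ev1_add)
qed
lemma Q1_neg: assumes "a \<in> Q1" shows "- a \<in> Q1"
proof -
  obtain x where "a = e1 x" using assms unfolding Q1_def by auto
  thus ?thesis unfolding Q1_def using rangeI[of e1 "neg1 x"] by (simp add: ev1_neg)
qed
lemma Q1_mul: assumes "a \<in> Q1" "b \<in> Q1" shows "a * b \<in> Q1"
proof -
  obtain x y where "a = e1 x" "b = e1 y" using assms unfolding Q1_def by auto
  thus ?thesis unfolding Q1_def using rangeI[of e1 "mul1 x y"] by (simp add: e1_mul)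
qed
lemma Q1_rat: "of_rat r \<in> Q1"
proof -
  have "e1 (r,0) = of_rat r" by simp
  thus ?thesis unfolding Q1_def by (metis rangeI)
qed
lemma Q1_ii: "\<i> \<in> Q1"
proof -
  have "e1 (0,1) = \<i>" by simp
  thus ?thesis unfolding Q1_def by (metis rangeI)
qed
lemma Q1_diff: "a \<in> Q1 \<Longrightarrow> b \<in> Q1 \<Longrightarrow> a - b \<in> Q1"
  using Q1_add[OF _ Q1_neg] by simp

lemma L2_char: "z \<in> L2 \<longleftrightarrow> (\<exists>u v. u \<in> Q1 \<and> v \<in> Q1 \<and> z = u + v * sqrt2)"
proof
  assume "z \<in> L2"
  then obtain x y where "z = e2 (x,y)" unfolding L2_def by (metis rangeE prod.exhaust)
  thus "\<exists>u v. u \<in> Q1 \<and> v \<in> Q1 \<and> z = u + v * sqrt2"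
    by (intro exI[of _ "e1 x"] exI[of _ "e1 y"]) (auto simp: Q1_def)
next
  assume "\<exists>u v. u \<in> Q1 \<and> v \<in> Q1 \<and> z = u + v * sqrt2"
  then obtain x y where "z = e1 x + e1 y * sqrt2" unfolding Q1_def by auto
  hence "z = e2 (x,y)" by simp
  thus "z \<in> L2" unfolding L2_def using rangeI[of e2 "(x,y)"] by simp
qed

lemma L2_uniq: assumes "u \<in> Q1" "v \<in> Q1" "u' \<in> Q1" "v' \<in> Q1" "u + v * sqrt2 = u' + v' * sqrt2"
  shows "u = u' \<and> v = v'"
proof -
  obtain x y x' y' where "u = e1 x" "v = e1 y" "u' = e1 x'" "v' = e1 y'" using assms unfolding Q1_def by auto
  with assms(5) have "e2 (x,y) = e2 (x',y')" by simp
  hence "(x,y) = (x',y')" by (rule e2_inj)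
  thus ?thesis using \<open>u = e1 x\<close> \<open>v = e1 y\<close> \<open>u' = e1 x'\<close> \<open>v' = e1 y'\<close> by simp
qed

lemma L2_add: assumes "a \<in> L2" "b \<in> L2" shows "a + b \<in> L2"
proof -
  obtain x y where "a = e2 x" "b = e2 y" using assms unfolding L2_def by auto
  thus ?thesis unfolding L2_def using rangeI[of e2 "add2 x y"] by (simp add: ev2_add)
qed
lemma L2_neg: assumes "a \<in> L2" shows "- a \<in> L2"
proof -
  obtain x where "a = e2 x" using assms unfolding L2_def by auto
  thus ?thesis unfolding L2_def using rangeI[of e2 "neg2 x"] by (simp add: ev2_neg)
qed
lemma L2_mul: assumes "a \<in> L2" "b \<in> L2" shows "a * b \<in> L2"
proof -
  obtain x y where "a = e2 x" "b = e2 y" using assms unfolding L2_def by auto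
  thus ?thesis unfolding L2_def using rangeI[of e2 "mul2 x y"] by (simp add: e2_mul)
qed
lemma L2_diff: "a \<in> L2 \<Longrightarrow> b \<in> L2 \<Longrightarrow> a - b \<in> L2"
  using L2_add[OF _ L2_neg] by simp
lemma Q1_L2: "a \<in> Q1 \<Longrightarrow> a \<in> L2"
  unfolding L2_char by (rule exI[of _ a], rule exI[of _ 0]) (simp add: Q1_rat[of 0, simplified])
lemma sqrt2_L2: "sqrt2 \<in> L2"
  unfolding L2_char by (rule exI[of _ 0], rule exI[of _ 1]) (simp add: Q1_rat[of 0, simplified] Q1_rat[of 1, simplified])

lemma Q1_zero_div: "a \<in> Q1 \<Longrightarrow> b \<in> Q1 \<Longrightarrow> a * b = 0 \<Longrightarrow> a = 0 \<or> b = 0" by simp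

lemma L2_inv: assumes "z \<in> L2" shows "inverse z \<in> L2"
proof (cases "z = 0")
  case True thus ?thesis using Q1_L2[OF Q1_rat[of 0]] by simp
next
  case False
  obtain u v where uv: "u \<in> Q1" "v \<in> Q1" "z = u + v * sqrt2" using assms L2_char by auto
  define d where "d = u*u - 2*(v*v)"
  have dQ: "d \<in> Q1" unfolding d_def using uv Q1_rat[of 2]
    by (intro Q1_diff Q1_mul) (auto intro: Q1_mul)
  have dnz: "d \<noteq> 0"
  proof
    assume d0: "d = 0"
    show False
    proof (cases "v = 0")
      case True
      hence "u \<noteq> 0" using False uv by simp
      thus False using d0 True unfolding d_def by simp
    next
      case False
      have "(u * inverse v) * (u * inverse v) = 2" using d0 False unfolding d_def by (simp add: field_simps)
      thus False using two_not_sq_Q1 Q1_mul[OF uv(1) Q1_inv[OF uv(2)]] by blast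
    qed
  qed
  have "z * ((u - v * sqrt2) * inverse d) = 1"
  proof -
    have "z * (u - v * sqrt2) = d" unfolding uv(3) d_def
      using sqrt2_sq by (simp add: algebra_simps)
    thus ?thesis using dnz by (simp add: mult.assoc[symmetric])
  qed
  hence "inverse z = (u - v * sqrt2) * inverse d" by (rule inverse_unique)
  moreover have "(u - v * sqrt2) * inverse d \<in> L2"
    using uv dQ Q1_inv[OF dQ] by (intro L2_mul L2_diff Q1_L2 sqrt2_L2) (auto intro: L2_mul Q1_L2 sqrt2_L2)
  ultimately show ?thesis by simp
qed

lemma rat_case1: assumes "p*p - q*q = (1::rat)" "p*q + q*p = 1" shows False
proof -
  have "(2*p*p-1)*(2*p*p-1) = 2" using assms by algebra
  thus False using rat_sq_ne2 by blast
qed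
lemma rat_case2: assumes "2*(p*p - q*q) = (1::rat)" "2*(p*q + q*p) = 1" shows False
proof -
  have "(4*p*p-1)*(4*p*p-1) = 2" using assms by algebra
  thus False using rat_sq_ne2 by blast
qed

lemma one_i_not_sq_L2: assumes "t \<in> L2" shows "t * t \<noteq> 1 + \<i>"
proof
  assume h: "t * t = 1 + \<i>"
  obtain u v where uv: "u \<in> Q1" "v \<in> Q1" "t = u + v * sqrt2" using assms L2_char by auto
  have "t * t = (u*u + 2*(v*v)) + (2*(u*v)) * sqrt2" unfolding uv(3)
    using sqrt2_sq by (simp add: algebra_simps)
  hence "(u*u + 2*(v*v)) + (2*(u*v)) * sqrt2 = (1 + \<i>) + 0 * sqrt2" using h by simp
  moreover have "u*u + 2*(v*v) \<in> Q1" "2*(u*v) \<in> Q1" "1 + \<i> \<in> Q1" "(0::complex) \<in> Q1"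
    using uv Q1_rat[of 2] Q1_rat[of 1] Q1_rat[of 0] Q1_ii by (auto intro!: Q1_add Q1_mul)
  ultimately have e: "u*u + 2*(v*v) = 1 + \<i>" "2*(u*v) = 0" using L2_uniq by blast+
  have "(if v = 0 then u else v) \<in> Q1" using uv by simp
  then obtain p q where pq: "(if v = 0 then u else v) = e1 (p,q)"
    unfolding Q1_def by (metis rangeE prod.exhaust)
  show False
  proof (cases "v = 0")
    case True
    hence "e1 (mul1 (p,q) (p,q)) = e1 (1,1)" using e pq by (simp only: e1_mul) simp
    hence "mul1 (p,q) (p,q) = (1,1)" by (rule e1_inj)
    thus False using rat_case1[of p q] by simp
  next
    case False
    hence "u = 0" using e by simp
    hence "e1 (mul1 (2,0) (mul1 (p,q) (p,q))) = e1 (1,1)" using e pq False by (simp only: e1_mul) simp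
    hence "mul1 (2,0) (mul1 (p,q) (p,q)) = (1,1)" by (rule e1_inj)
    thus False using rat_case2[of p q] by simp
  qed
qed


lemma K3_char: "z \<in> K3 \<longleftrightarrow> (\<exists>u v. u \<in> L2 \<and> v \<in> L2 \<and> z = u + v * alpha)"
proof
  assume "z \<in> K3"
  then obtain x y where "z = e3 (x,y)" unfolding K3_def by (metis rangeE prod.exhaust)
  thus "\<exists>u v. u \<in> L2 \<and> v \<in> L2 \<and> z = u + v * alpha"
    by (intro exI[of _ "e2 x"] exI[of _ "e2 y"]) (auto simp: L2_def)
next
  assume "\<exists>u v. u \<in> L2 \<and> v \<in> L2 \<and> z = u + v * alpha"
  then obtain x y where "z = e2 x + e2 y * alpha" unfolding L2_def by auto
  hence "z = e3 (x,y)" by simp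
  thus "z \<in> K3" unfolding K3_def using rangeI[of e3 "(x,y)"] by simp
qed

lemma K3_add: assumes "a \<in> K3" "b \<in> K3" shows "a + b \<in> K3"
proof -
  obtain x y where "a = e3 x" "b = e3 y" using assms unfolding K3_def by auto
  thus ?thesis unfolding K3_def using rangeI[of e3 "add3 x y"] by (simp add: ev3_add)
qed
lemma K3_neg: assumes "a \<in> K3" shows "- a \<in> K3"
proof -
  obtain x where "a = e3 x" using assms unfolding K3_def by auto
  thus ?thesis unfolding K3_def using rangeI[of e3 "neg3 x"] by (simp add: ev3_neg)
qed
lemma K3_mul: assumes "a \<in> K3" "b \<in> K3" shows "a * b \<in> K3"
proof -
  obtain x y where "a = e3 x" "b = e3 y" using assms unfolding K3_def by auto
  thus ?thesis unfolding K3_def using rangeI[of e3 "mul3 x y"] by (simp add: e3_mul)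
qed
lemma K3_diff: "a \<in> K3 \<Longrightarrow> b \<in> K3 \<Longrightarrow> a - b \<in> K3"
  using K3_add[OF _ K3_neg] by simp
lemma L2_K3: "a \<in> L2 \<Longrightarrow> a \<in> K3"
  unfolding K3_char by (rule exI[of _ a], rule exI[of _ 0]) (simp add: Q1_L2[OF Q1_rat[of 0], simplified])
lemma alpha_K3: "alpha \<in> K3"
  unfolding K3_char by (rule exI[of _ 0], rule exI[of _ 1])
    (simp add: Q1_L2[OF Q1_rat[of 0], simplified] Q1_L2[OF Q1_rat[of 1], simplified])
lemma rat_K3: "of_rat r \<in> K3" by (rule L2_K3[OF Q1_L2[OF Q1_rat]])
lemma ii_K3: "\<i> \<in> K3" by (rule L2_K3[OF Q1_L2[OF Q1_ii]])
lemma sqrt2_K3: "sqrt2 \<in> K3" by (rule L2_K3[OF sqrt2_L2])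

lemma e3_zero: assumes "e3 a = 0" shows "a = (((0,0),(0,0)),((0,0),(0,0)))"
proof -
  obtain x y where a: "a = (x,y)" by (cases a)
  have y: "y = ((0,0),(0,0))"
  proof (rule ccontr)
    assume "y \<noteq> ((0,0),(0,0))"
    hence ny: "e2 y \<noteq> 0" using e2_zero by blast
    have "alpha = - e2 x * inverse (e2 y)" using assms a ny by (simp add: field_simps eq_neg_iff_add_eq_0)
    moreover have "- e2 x * inverse (e2 y) \<in> L2" unfolding L2_def
      using L2_mul[OF L2_neg L2_inv] by (simp add: L2_def)
    ultimately show False using one_i_not_sq_L2 alpha_sq by metis
  qed
  hence "e2 x = 0" using assms a by simp
  hence "x = ((0,0),(0,0))" by (rule e2_zero)
  thus ?thesis using a y by simp
qed

lemma e3_inj: "e3 a = e3 b \<Longrightarrow> a = b"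
proof -
  assume "e3 a = e3 b"
  hence "e3 (add3 a (neg3 b)) = 0" by (simp add: ev3_add ev3_neg)
  hence "add3 a (neg3 b) = (((0,0),(0,0)),((0,0),(0,0)))" by (rule e3_zero)
  thus ?thesis by (cases a; cases b) auto
qed

lemma K3_inv: assumes "z \<in> K3" shows "inverse z \<in> K3"
proof (cases "z = 0")
  case True thus ?thesis using rat_K3[of 0] by simp
next
  case False
  obtain u v where uv: "u \<in> L2" "v \<in> L2" "z = u + v * alpha" using assms K3_char by auto
  define d where "d = u*u - (1+\<i>)*(v*v)"
  have dL: "d \<in> L2" unfolding d_def using uv Q1_L2[OF Q1_rat[of 1]] Q1_L2[OF Q1_ii]
    by (intro L2_diff L2_mul L2_add) auto
  have dnz: "d \<noteq> 0"
  proof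
    assume d0: "d = 0"
    show False
    proof (cases "v = 0")
      case True
      hence "u \<noteq> 0" using False uv by simp
      thus False using d0 True unfolding d_def by simp
    next
      case False
      have "(u * inverse v) * (u * inverse v) = 1 + \<i>" using d0 False unfolding d_def by (simp add: field_simps)
      thus False using one_i_not_sq_L2 L2_mul[OF uv(1) L2_inv[OF uv(2)]] by blast
    qed
  qed
  have "z * ((u - v * alpha) * inverse d) = 1"
  proof -
    have "z * (u - v * alpha) = u*u - (v*v)*(alpha*alpha)" unfolding uv(3) by (simp add: algebra_simps)
    also have "\<dots> = d" unfolding d_def alpha_sq by (simp add: algebra_simps)
    finally have "z * (u - v * alpha) = d" .
    thus ?thesis using dnz by (simp add: mult.assoc[symmetric])
  qed
  hence "inverse z = (u - v * alpha) * inverse d" by (rule inverse_unique)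
  moreover have "(u - v * alpha) * inverse d \<in> K3"
    using uv dL L2_inv[OF dL] alpha_K3 by (intro K3_mul K3_diff; (rule L2_K3)?) (auto intro: K3_mul L2_K3)
  ultimately show ?thesis by simp
qed

lemma subfield_rat: assumes F: "is_subfield F" shows "of_rat r \<in> F"
proof -
  have cl: "\<forall>x\<in>F. \<forall>y\<in>F. x + y \<in> F \<and> x - y \<in> F \<and> x * y \<in> F" "0 \<in> F" "1 \<in> F"
    "\<forall>x\<in>F. x \<noteq> 0 \<longrightarrow> inverse x \<in> F" using F unfolding is_subfield_def by auto
  have nat: "of_nat n \<in> F" for n
    by (induction n) (use cl in auto)
  have int: "of_int k \<in> F" for k
  proof (cases "k \<ge> 0")
    case True thus ?thesis using nat[of "nat k"] by simp
  next
    case False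
    have "(0::complex) - of_nat (nat (-k)) \<in> F" using cl nat by blast
    thus ?thesis using False by simp
  qed
  obtain a b where r: "r = Fract a b" "b > 0" by (cases r) auto
  have "of_rat r = of_int a * inverse (of_int b :: complex)" using r by (simp add: of_rat_rat divide_inverse)
  moreover have "inverse (of_int b :: complex) \<in> F" using cl int r(2) by simp
  ultimately show ?thesis using cl int by simp
qed

lemma K3_subfield: "is_subfield K3"
  unfolding is_subfield_def using K3_add K3_diff K3_mul K3_inv rat_K3[of 0] rat_K3[of 1] by auto

lemma K_eq: "K = K3"
proof
  show "K \<subseteq> K3" unfolding K_def using K3_subfield ii_K3 sqrt2_K3 alpha_K3 by blast
next
  show "K3 \<subseteq> K"
  proof
    fix z assume "z \<in> K3"
    then obtain c where z: "z = e3 c" unfolding K3_def by auto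
    show "z \<in> K" unfolding K_def
    proof
      fix F assume "F \<in> {F. is_subfield F \<and> \<i> \<in> F \<and> sqrt2 \<in> F \<and> alpha \<in> F}"
      hence F: "is_subfield F" "\<i> \<in> F" "sqrt2 \<in> F" "alpha \<in> F" by auto
      have cl: "\<forall>x\<in>F. \<forall>y\<in>F. x + y \<in> F \<and> x - y \<in> F \<and> x * y \<in> F" using F(1) unfolding is_subfield_def by auto
      have r: "\<And>r. of_rat r \<in> F" using subfield_rat[OF F(1)] .
      have e1F: "e1 x \<in> F" for x using cl r F by (cases x) auto
      have e2F: "e2 x \<in> F" for x using cl e1F F by (cases x) auto
      show "z \<in> F" using z cl e2F F by (cases c) auto
    qed
  qed
qed


interpretation qv: vector_space "\<lambda>(r::rat) (z::complex). of_rat r * z"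
  by unfold_locales (simp_all add: algebra_simps of_rat_add of_rat_mult)

definition "TB = {1, \<i>, sqrt2, \<i>*sqrt2, alpha, \<i>*alpha, sqrt2*alpha, \<i>*sqrt2*alpha}"

lemma TB_card: "card TB \<le> 8"
  using card_length[of "[1, \<i>, sqrt2, \<i>*sqrt2, alpha, \<i>*alpha, sqrt2*alpha, \<i>*sqrt2*alpha]"]
  unfolding TB_def by simp

lemma K3_span: assumes "z \<in> K3" shows "z \<in> qv.span TB"
proof -
  obtain p1 q1 p2 q2 p3 q3 p4 q4 where z: "z = e3 (((p1,q1),(p2,q2)),((p3,q3),(p4,q4)))"
    using assms unfolding K3_def by (metis rangeE prod.exhaust)
  have b: "\<And>r m. m \<in> TB \<Longrightarrow> of_rat r * m \<in> qv.span TB" by (intro qv.span_scale qv.span_base)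
  have "z = of_rat p1 * 1 + of_rat q1 * \<i> + of_rat p2 * sqrt2 + of_rat q2 * (\<i>*sqrt2)
      + of_rat p3 * alpha + of_rat q3 * (\<i>*alpha) + of_rat p4 * (sqrt2*alpha) + of_rat q4 * (\<i>*sqrt2*alpha)"
    unfolding z by (simp add: algebra_simps)
  also have "\<dots> \<in> qv.span TB" by (intro qv.span_add b) (auto simp: TB_def)
  finally show ?thesis .
qed

lemma K3_algebraic: assumes "z \<in> K3" shows "algebraic z"
proof (cases "inj_on (\<lambda>k. z^k) {0..8::nat}")
  case False
  then obtain j k where jk: "j \<in> {0..8::nat}" "k \<in> {0..8}" "j \<noteq> k" "z^j = z^k" unfolding inj_on_def by blast
  define p :: "complex poly" where "p = monom 1 j - monom 1 k"
  have "coeff p j = 1" using jk by (simp add: p_def coeff_diff)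
  hence "p \<noteq> 0" by auto
  moreover have "poly p z = 0" by (simp add: p_def poly_monom jk)
  moreover have "\<forall>i. coeff p i \<in> \<rat>" by (simp add: p_def coeff_diff)
  ultimately show ?thesis unfolding algebraic_altdef by blast
next
  case True
  define S where "S = (\<lambda>k. z^k) ` {0..8::nat}"
  have cS: "card S = 9" unfolding S_def using card_image[OF True] by simp
  have SK: "S \<subseteq> K3" unfolding S_def
  proof
    fix v assume "v \<in> (\<lambda>k. z^k) ` {0..8::nat}"
    then obtain k where v: "v = z^k" by auto
    have "z^k \<in> K3" by (induction k) (use assms rat_K3[of 1] K3_mul in auto)
    thus "v \<in> K3" using v by simp
  qed
  have "qv.dependent S"
  proof (rule ccontr)
    assume ind: "qv.independent S"
    have "S \<subseteq> qv.span TB" using SK K3_span by blast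
    hence "card S \<le> card TB" using qv.independent_span_bound[OF _ ind] by (simp add: TB_def)
    thus False using cS TB_card by simp
  qed
  then obtain t u where tu: "finite t" "t \<subseteq> S" "(\<Sum>v\<in>t. of_rat (u v) * v) = 0" "\<exists>v\<in>t. u v \<noteq> 0"
    unfolding qv.dependent_explicit by blast
  define c where "c k = (if z^k \<in> t then of_rat (u (z^k)) else (0::complex))" for k
  define p where "p = (\<Sum>k\<in>{0..8::nat}. monom (c k) k)"
  define A where "A = {k\<in>{0..8::nat}. z^k \<in> t}"
  have tA: "t = (\<lambda>k. z^k) ` A" using tu(2) unfolding A_def S_def by auto
  have injA: "inj_on (\<lambda>k. z^k) A" using True unfolding A_def by (rule inj_on_subset) auto
  have "poly p z = (\<Sum>k\<in>{0..8::nat}. c k * z^k)" by (simp add: p_def poly_sum poly_monom)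
  also have "\<dots> = (\<Sum>k\<in>A. of_rat (u (z^k)) * z^k)"
    unfolding A_def c_def by (subst sum.inter_filter) (simp_all add: if_distrib[of "\<lambda>x. x * _"] cong: if_cong)
  also have "\<dots> = (\<Sum>v\<in>t. of_rat (u v) * v)" unfolding tA by (simp add: sum.reindex[OF injA])
  finally have pz: "poly p z = 0" using tu(3) by simp
  have cp: "coeff p i = (if i \<le> 8 then c i else 0)" for i
    by (simp add: p_def coeff_sum)
  obtain v where v: "v \<in> t" "u v \<noteq> 0" using tu(4) by blast
  then obtain k where k: "k \<in> {0..8::nat}" "v = z^k" using tu(2) unfolding S_def by auto
  have "coeff p k \<noteq> 0" using k v by (simp add: cp c_def)
  hence "p \<noteq> 0" by auto
  moreover have "\<forall>i. coeff p i \<in> \<rat>" by (simp add: cp c_def)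
  ultimately show ?thesis using pz unfolding algebraic_altdef by blast
qed

lemma K_Qbar: "K \<subseteq> Qbar" unfolding K_eq Qbar_def using K3_algebraic by blast


definition fE :: "complex \<Rightarrow> complex" where "fE x = x^3 + x^2 + x + 1"
definition gE :: "complex \<Rightarrow> complex" where "gE x = 3*x^2 + 2*x + 1"
definition NE :: "complex \<Rightarrow> complex" where "NE x = (gE x)^2 - 4*(1+3*x)*fE x"
definition FE :: "complex \<Rightarrow> complex" where "FE x = gE x * NE x + 8 * (fE x)^2"

lemma E_add_None2[simp]: "E_add P None = P" by (cases P) (auto simp: E_add_def)
lemma E_add_None1[simp]: "E_add None P = P" by (simp add: E_add_def)

lemma E_smul4: "E_smul 4 P = E_add P (E_add P (E_add P P))"
  by (simp add: E_smul_def numeral_eq_Suc)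

lemma E4_char: assumes on: "y^2 = fE x"
  shows "E_smul 4 (Some (x,y)) = None \<longleftrightarrow> y = 0 \<or> FE x = 0"
proof (cases "y = 0")
  case True
  have "E_add (Some (x,y)) (Some (x,y)) = None" using True by (simp add: E_add_def)
  thus ?thesis using True by (simp add: E_smul4)
next
  case False
  define l where "l = gE x / (2*y)"
  define x2 where "x2 = l^2 - 1 - x - x"
  define y2 where "y2 = - (l * (x2 - x) + y)"
  have P2: "E_add (Some (x,y)) (Some (x,y)) = Some (x2, y2)"
    using False unfolding x2_def y2_def l_def gE_def by (simp add: E_add_def Let_def)
  define D where "D = x2 - x"
  have ly: "l * y = gE x / 2" using False unfolding l_def by (simp add: field_simps)
  have y4: "y^4 = (fE x)^2" using on by (metis power2_eq_square power_mult_distrib numeral_Bit0 power_add mult_2)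
  have DN: "D * (4 * y^2) = NE x"
  proof -
    have Deq: "D = l^2 - 1 - 3*x" unfolding D_def x2_def by simp
    have "D * (4*y^2) = (2*(l*y))^2 - 4*(1+3*x)*y^2" unfolding Deq by (simp add: algebra_simps power2_eq_square)
    thus ?thesis unfolding ly NE_def on by simp
  qed
  have FD: "FE x = 2*y^2 * (2 * gE x * D + 4*y^2)"
  proof -
    have "FE x = gE x * (D * (4 * y^2)) + 8 * y^4" unfolding FE_def DN y4 ..
    thus ?thesis by (simp add: algebra_simps power2_eq_square power4_eq_xxxx)
  qed
  show ?thesis
  proof (cases "D = 0")
    case True
    hence "x2 = x" "y2 = - y" unfolding D_def y2_def by simp_all
    hence "E_add (Some (x,y)) (Some (x2,y2)) = None" by (simp add: E_add_def)
    hence "E_smul 4 (Some (x,y)) = Some (x,y)" by (simp add: E_smul4 P2)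
    moreover have "FE x \<noteq> 0" using FD True False by simp
    ultimately show ?thesis using False by simp
  next
    case Dnz: False
    define m where "m = (y2 - y) / (x2 - x)"
    define x3 where "x3 = m^2 - 1 - x - x2"
    define y3 where "y3 = - (m * (x3 - x) + y)"
    have "x \<noteq> x2" using Dnz unfolding D_def by simp
    hence P3: "E_add (Some (x,y)) (Some (x2,y2)) = Some (x3, y3)"
      unfolding x3_def y3_def m_def by (simp add: E_add_def Let_def)
    have "E_smul 4 (Some (x,y)) = E_add (Some (x,y)) (Some (x3, y3))" by (simp add: E_smul4 P2 P3)
    also have "\<dots> = None \<longleftrightarrow> x3 = x"
      unfolding y3_def by (auto simp: E_add_def Let_def split: if_splits)
    finally have e: "E_smul 4 (Some (x,y)) = None \<longleftrightarrow> x3 = x" .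
    have mm: "m = - l - 2*y/D" unfolding m_def y2_def D_def[symmetric] using Dnz by (simp add: field_simps)
    have "x3 - x = m^2 - l^2" unfolding x3_def x2_def by simp
    also have "\<dots> = 4*(l*y)/D + 4*y^2/D^2" unfolding mm using Dnz by (simp add: field_simps power2_eq_square)
    also have "\<dots> = (2 * gE x * D + 4*y^2) / D^2" unfolding ly using Dnz by (simp add: field_simps power2_eq_square)
    finally have "x3 - x = (2 * gE x * D + 4*y^2) / D^2" .
    hence "x3 = x \<longleftrightarrow> 2 * gE x * D + 4*y^2 = 0" using Dnz by auto
    also have "\<dots> \<longleftrightarrow> FE x = 0" using FD False by simp
    finally show ?thesis using e False by simp
  qed
qed


definition hom_on :: "complex set \<Rightarrow> (complex \<Rightarrow> complex) \<Rightarrow> bool" where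
  "hom_on S \<phi> = (\<forall>x\<in>S. \<forall>y\<in>S. \<phi> (x + y) = \<phi> x + \<phi> y \<and> \<phi> (x * y) = \<phi> x * \<phi> y)"

lemma hom_fixrat:
  assumes h: "hom_on S \<phi>" and inj: "inj_on \<phi> S" and rat: "\<And>r. of_rat r \<in> S"
  shows "\<phi> (of_rat r) = of_rat r"
proof -
  have S0: "0 \<in> S" and S1: "1 \<in> S" using rat[of 0] rat[of 1] by simp_all
  have Snat: "of_nat n \<in> S" for n using rat[of "of_nat n"] by simp
  have Sint: "of_int n \<in> S" for n using rat[of "of_int n"] by simp
  have add: "\<phi> (x + y) = \<phi> x + \<phi> y" and mul: "\<phi> (x * y) = \<phi> x * \<phi> y" if "x \<in> S" "y \<in> S" for x y
    using h that unfolding hom_on_def by auto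
  have p0: "\<phi> 0 = 0" using add[OF S0 S0] by simp
  have "\<phi> 1 = \<phi> 1 * \<phi> 1" using mul[OF S1 S1] by simp
  moreover have "\<phi> 1 \<noteq> 0" using inj S0 S1 p0 unfolding inj_on_def by force
  ultimately have p1: "\<phi> 1 = 1" by (metis mult_cancel_left1)
  have pn: "\<phi> (of_nat n) = of_nat n" for n
  proof (induction n)
    case 0 thus ?case using p0 by simp
  next
    case (Suc n)
    have "\<phi> (of_nat (Suc n)) = \<phi> (of_nat n + 1)" by (simp add: add.commute)
    also have "\<dots> = of_nat n + 1" using add[OF Snat S1] Suc p1 by (simp add: add.commute)
    finally show ?case by simp
  qed
  have pneg: "\<phi> (- x) = - \<phi> x" if "x \<in> S" "- x \<in> S" for x
    using add[OF that(1) that(2)] p0 by (simp add: eq_neg_iff_add_eq_0 add.commute)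
  have pi: "\<phi> (of_int k) = of_int k" for k
  proof (cases "k \<ge> 0")
    case True thus ?thesis using pn[of "nat k"] by simp
  next
    case False
    have ki: "(of_int k :: complex) = - of_nat (nat (-k))" using False by simp
    have "- (of_nat (nat (-k)) :: complex) \<in> S" using Sint[of k] ki by simp
    hence "\<phi> (- of_nat (nat (-k))) = - of_nat (nat (-k))"
      using pneg[OF Snat, of "nat (-k)"] pn by simp
    thus ?thesis using ki by simp
  qed
  obtain a b where r: "r = Fract a b" "b > 0" by (cases r) auto
  have eq: "of_rat r * of_int b = (of_int a :: complex)" using r by (simp add: of_rat_rat)
  have "\<phi> (of_rat r) * of_int b = of_int a"
    using mul[OF rat Sint, of r b] pi eq by simp
  thus ?thesis using r(2) eq by (metis mult_cancel_right of_int_eq_0_iff order_less_irrefl)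
qed

lemma hom_e3:
  assumes h: "hom_on S \<phi>" and sub: "K3 \<subseteq> S" and fr: "\<And>r. \<phi> (of_rat r) = of_rat r"
  shows "\<phi> (e3 c) = ev3 (\<phi> \<i>) (\<phi> sqrt2) (\<phi> alpha) c"
proof -
  have add: "\<phi> (x + y) = \<phi> x + \<phi> y" and mul: "\<phi> (x * y) = \<phi> x * \<phi> y" if "x \<in> K3" "y \<in> K3" for x y
    using h that sub unfolding hom_on_def by auto
  have E1: "e1 x \<in> K3" for x unfolding K3_def
    using rangeI[of e3 "((x,(0,0)),((0,0),(0,0)))"] by simp
  have E2: "e2 x \<in> K3" for x unfolding K3_def
    using rangeI[of e3 "(x,((0,0),(0,0)))"] by simp
  have h1: "\<phi> (e1 x) = ev1 (\<phi> \<i>) x" for x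
  proof (cases x)
    case (Pair p q)
    thus ?thesis using add[OF rat_K3 K3_mul[OF rat_K3 ii_K3]] mul[OF rat_K3 ii_K3] fr by simp
  qed
  have h2: "\<phi> (e2 x) = ev2 (\<phi> \<i>) (\<phi> sqrt2) x" for x
  proof -
    obtain u v where "x = (u,v)" by (cases x)
    thus ?thesis using add[OF E1 K3_mul[OF E1 sqrt2_K3]] mul[OF E1 sqrt2_K3] h1 by simp
  qed
  show ?thesis
  proof -
    obtain u v where "c = (u,v)" by (cases c)
    thus ?thesis using add[OF E2 K3_mul[OF E2 alpha_K3]] mul[OF E2 alpha_K3] h2 by simp
  qed
qed

fun kapp1 :: "q3 \<Rightarrow> q1 \<Rightarrow> q3" where "kapp1 U (p,q) = add3 (rc3 p) (mul3 (rc3 q) U)"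
fun kapp2 :: "q3 \<Rightarrow> q3 \<Rightarrow> q2 \<Rightarrow> q3" where "kapp2 U V (x,y) = add3 (kapp1 U x) (mul3 (kapp1 U y) V)"
fun kapp3 :: "q3 \<Rightarrow> q3 \<Rightarrow> q3 \<Rightarrow> q3 \<Rightarrow> q3" where "kapp3 U V W (x,y) = add3 (kapp2 U V x) (mul3 (kapp2 U V y) W)"

lemma kapp3_e3: "ev3 (e3 U) (e3 V) (e3 W) c = e3 (kapp3 U V W c)"
proof -
  have k1: "ev1 (e3 U) x = e3 (kapp1 U x)" for x by (cases x) (simp add: ev3_add e3_mul ev3_rc)
  have k2: "ev2 (e3 U) (e3 V) x = e3 (kapp2 U V x)" for x
  proof -
    obtain u v where "x = (u,v)" by (cases x)
    thus ?thesis by (simp add: ev3_add e3_mul k1)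
  qed
  obtain u v where "c = (u,v)" by (cases c)
  thus ?thesis by (simp add: ev3_add e3_mul k2)
qed


definition z3 :: q3 where "z3 = (((0,0),(0,0)),((0,0),(0,0)))"

lemma e3_ne: "a \<noteq> b \<Longrightarrow> e3 a \<noteq> e3 b" using e3_inj by blast

lemma e3_sq: "(e3 a)^2 = e3 (mul3 a a)" by (simp add: e3_mul power2_eq_square)

lemma EC_chord:
  assumes "c1 \<noteq> c2" "mul3 l (sub3 c2 c1) = sub3 d2 d1"
    "sub3 (sub3 (sub3 (mul3 l l) (rc3 1)) c1) c2 = x3"
    "neg3 (add3 (mul3 l (sub3 x3 c1)) d1) = y3"
  shows "E_add (Some (e3 c1, e3 d1)) (Some (e3 c2, e3 d2)) = Some (e3 x3, e3 y3)"
proof -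
  have ne: "e3 c1 \<noteq> e3 c2" using assms(1) e3_ne by blast
  hence ne': "e3 c2 - e3 c1 \<noteq> 0" by simp
  have "e3 l * (e3 c2 - e3 c1) = e3 d2 - e3 d1"
    using arg_cong[OF assms(2), of e3] by (simp add: e3_mul ev3_sub)
  hence sl: "(e3 d2 - e3 d1) / (e3 c2 - e3 c1) = e3 l" using ne' by (simp add: field_simps)
  have x3: "e3 x3 = (e3 l)^2 - 1 - e3 c1 - e3 c2" using arg_cong[OF assms(3), of e3]
    by (simp add: e3_mul ev3_sub ev3_rc power2_eq_square)
  have y3: "e3 y3 = - (e3 l * (e3 x3 - e3 c1) + e3 d1)" using arg_cong[OF assms(4), of e3]
    by (simp add: e3_mul ev3_sub ev3_neg ev3_add)
  have "E_add (Some (e3 c1, e3 d1)) (Some (e3 c2, e3 d2)) = (let l = (e3 d2 - e3 d1) / (e3 c2 - e3 c1);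
      x = l^2 - 1 - e3 c1 - e3 c2 in Some (x, - (l*(x - e3 c1) + e3 d1)))"
    using ne unfolding E_add_def by simp
  also have "\<dots> = Some (e3 x3, e3 y3)" unfolding sl Let_def x3 y3 ..
  finally show ?thesis .
qed

lemma EC_tangent:
  assumes "d1 \<noteq> z3" "mul3 l (add3 d1 d1) = add3 (add3 (mul3 (rc3 3) (mul3 c1 c1)) (mul3 (rc3 2) c1)) (rc3 1)"
    "sub3 (sub3 (sub3 (mul3 l l) (rc3 1)) c1) c1 = x3"
    "neg3 (add3 (mul3 l (sub3 x3 c1)) d1) = y3"
  shows "E_add (Some (e3 c1, e3 d1)) (Some (e3 c1, e3 d1)) = Some (e3 x3, e3 y3)"
proof -
  have nz: "e3 d1 \<noteq> 0" using assms(1) e3_zero unfolding z3_def by blast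
  hence ne: "e3 d1 \<noteq> - e3 d1" by (simp add: eq_neg_iff_add_eq_0)
  have "e3 l * (2 * e3 d1) = 3 * (e3 c1)^2 + 2 * e3 c1 + 1"
    using arg_cong[OF assms(2), of e3] by (simp add: e3_mul ev3_add ev3_rc power2_eq_square)
  hence sl: "(3 * (e3 c1)^2 + 2 * e3 c1 + 1) / (2 * e3 d1) = e3 l" using nz by (simp add: field_simps)
  have x3: "e3 x3 = (e3 l)^2 - 1 - e3 c1 - e3 c1" using arg_cong[OF assms(3), of e3]
    by (simp add: e3_mul ev3_sub ev3_rc power2_eq_square)
  have y3: "e3 y3 = - (e3 l * (e3 x3 - e3 c1) + e3 d1)" using arg_cong[OF assms(4), of e3]
    by (simp add: e3_mul ev3_sub ev3_neg ev3_add)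
  have "E_add (Some (e3 c1, e3 d1)) (Some (e3 c1, e3 d1)) = (let l = (3 * (e3 c1)^2 + 2 * e3 c1 + 1) / (2 * e3 d1);
      x = l^2 - 1 - e3 c1 - e3 c1 in Some (x, - (l*(x - e3 c1) + e3 d1)))"
    using ne unfolding E_add_def by simp
  also have "\<dots> = Some (e3 x3, e3 y3)" unfolding sl Let_def x3 y3 ..
  finally show ?thesis .
qed

lemma EC_opp: assumes "neg3 d1 = d2" shows "E_add (Some (e3 c, e3 d1)) (Some (e3 c, e3 d2)) = None"
proof -
  have "e3 d1 = - e3 d2" using arg_cong[OF assms, of e3] by (simp add: ev3_neg) (metis minus_minus)
  thus ?thesis by (simp add: E_add_def)
qed


definition Pp :: ept where "Pp = Some (e3 (((0,(-1)),(0,0)),((0,0),(0,(-1)))), e3 (((0,2),(0,0)),((0,0),(1,1))))"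

definition Qp :: ept where "Qp = Some (e3 ((((-1),0),(1,0)),((0,0),(0,0))), e3 (((0,0),(0,0)),(((-1),(-1)),(0,1))))"

lemma P2: "E_add Pp Pp = Some (e3 (((0,(-1)),(0,0)),((0,0),(0,0))), e3 (((0,0),(0,0)),((0,0),(0,0))))"
  unfolding Pp_def by (rule EC_tangent[where l="((((-1),1),(0,0)),((0,0),((-1/2),(1/2))))"]) (simp_all add: z3_def sub3_def rc3_def)

lemma P3: "E_add Pp (Some (e3 (((0,(-1)),(0,0)),((0,0),(0,0))), e3 (((0,0),(0,0)),((0,0),(0,0))))) = Some (e3 (((0,(-1)),(0,0)),((0,0),(0,(-1)))), e3 (((0,(-2)),(0,0)),((0,0),((-1),(-1)))))"
  unfolding Pp_def by (rule EC_chord[where l="((((-1),1),(0,0)),((0,0),((-1/2),(1/2))))"]) (simp_all add: z3_def sub3_def rc3_def)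

lemma Q2: "E_add Qp Qp = Some (e3 ((((-1),0),(0,0)),((0,0),(0,0))), e3 (((0,0),(0,0)),((0,0),(0,0))))"
  unfolding Qp_def by (rule EC_tangent[where l="(((0,0),(0,0)),((0,1),((-1/2),(-1/2))))"]) (simp_all add: z3_def sub3_def rc3_def)

lemma Q3: "E_add Qp (Some (e3 ((((-1),0),(0,0)),((0,0),(0,0))), e3 (((0,0),(0,0)),((0,0),(0,0))))) = Some (e3 ((((-1),0),(1,0)),((0,0),(0,0))), e3 (((0,0),(0,0)),((1,1),(0,(-1)))))"
  unfolding Qp_def by (rule EC_chord[where l="(((0,0),(0,0)),((0,1),((-1/2),(-1/2))))"]) (simp_all add: z3_def sub3_def rc3_def)

lemma Psm: "E_smul 0 Pp = None" "E_smul 1 Pp = Pp" "E_smul 2 Pp = Some (e3 (((0,(-1)),(0,0)),((0,0),(0,0))), e3 (((0,0),(0,0)),((0,0),(0,0))))" "E_smul 3 Pp = Some (e3 (((0,(-1)),(0,0)),((0,0),(0,(-1)))), e3 (((0,(-2)),(0,0)),((0,0),((-1),(-1)))))"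
proof -
  have "E_smul 0 Pp = None" "E_smul 1 Pp = Pp" "E_smul 2 Pp = E_add Pp Pp" "E_smul 3 Pp = E_add Pp (E_add Pp Pp)"
    by (simp_all add: E_smul_def numeral_eq_Suc)
  thus "E_smul 0 Pp = None" "E_smul 1 Pp = Pp" "E_smul 2 Pp = Some (e3 (((0,(-1)),(0,0)),((0,0),(0,0))), e3 (((0,0),(0,0)),((0,0),(0,0))))" "E_smul 3 Pp = Some (e3 (((0,(-1)),(0,0)),((0,0),(0,(-1)))), e3 (((0,(-2)),(0,0)),((0,0),((-1),(-1)))))"
    by (simp_all only: P2 P3)
qed

lemma Qsm: "E_smul 0 Qp = None" "E_smul 1 Qp = Qp" "E_smul 2 Qp = Some (e3 ((((-1),0),(0,0)),((0,0),(0,0))), e3 (((0,0),(0,0)),((0,0),(0,0))))" "E_smul 3 Qp = Some (e3 ((((-1),0),(1,0)),((0,0),(0,0))), e3 (((0,0),(0,0)),((1,1),(0,(-1)))))"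
proof -
  have "E_smul 0 Qp = None" "E_smul 1 Qp = Qp" "E_smul 2 Qp = E_add Qp Qp" "E_smul 3 Qp = E_add Qp (E_add Qp Qp)"
    by (simp_all add: E_smul_def numeral_eq_Suc)
  thus "E_smul 0 Qp = None" "E_smul 1 Qp = Qp" "E_smul 2 Qp = Some (e3 ((((-1),0),(0,0)),((0,0),(0,0))), e3 (((0,0),(0,0)),((0,0),(0,0))))" "E_smul 3 Qp = Some (e3 ((((-1),0),(1,0)),((0,0),(0,0))), e3 (((0,0),(0,0)),((1,1),(0,(-1)))))"
    by (simp_all only: Q2 Q3)
qed

lemma C11: "E_add Pp Qp = Some (e3 (((0,1),(0,0)),(((-1),(-1)),(0,0))), e3 (((0,(-2)),(0,0)),((0,2),(0,0))))"
  unfolding Pp_def Qp_def by (rule EC_chord[where l="(((0,1),(0,0)),(((-1/2),(1/2)),((-1/2),0)))"]) (simp_all add: z3_def sub3_def rc3_def)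

lemma C12: "E_add Pp (Some (e3 ((((-1),0),(0,0)),((0,0),(0,0))), e3 (((0,0),(0,0)),((0,0),(0,0))))) = Some (e3 (((0,(-1)),(0,0)),((0,0),(0,1))), e3 (((0,(-2)),(0,0)),((0,0),(1,1))))"
  unfolding Pp_def Qp_def by (rule EC_chord[where l="((((-1),1),(0,0)),((0,0),(0,0)))"]) (simp_all add: z3_def sub3_def rc3_def)

lemma C13: "E_add Pp (Some (e3 ((((-1),0),(1,0)),((0,0),(0,0))), e3 (((0,0),(0,0)),((1,1),(0,(-1)))))) = Some (e3 (((0,1),(0,0)),((1,1),(0,0))), e3 (((0,2),(0,0)),((0,2),(0,0))))"
  unfolding Pp_def Qp_def by (rule EC_chord[where l="((((-1),0),(0,0)),(((-1/2),(-1/2)),(0,(1/2))))"]) (simp_all add: z3_def sub3_def rc3_def)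

lemma C21: "E_add (Some (e3 (((0,(-1)),(0,0)),((0,0),(0,0))), e3 (((0,0),(0,0)),((0,0),(0,0))))) Qp = Some (e3 ((((-1),0),((-1),0)),((0,0),(0,0))), e3 (((0,0),(0,0)),((1,1),(0,1))))"
  unfolding Pp_def Qp_def by (rule EC_chord[where l="(((0,0),(0,0)),((0,1),(0,0)))"]) (simp_all add: z3_def sub3_def rc3_def)

lemma C22: "E_add (Some (e3 (((0,(-1)),(0,0)),((0,0),(0,0))), e3 (((0,0),(0,0)),((0,0),(0,0))))) (Some (e3 ((((-1),0),(0,0)),((0,0),(0,0))), e3 (((0,0),(0,0)),((0,0),(0,0))))) = Some (e3 (((0,1),(0,0)),((0,0),(0,0))), e3 (((0,0),(0,0)),((0,0),(0,0))))"
  by (rule EC_chord[where l="(((0,0),(0,0)),((0,0),(0,0)))"]) (simp_all add: z3_def sub3_def rc3_def)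

lemma C23: "E_add (Some (e3 (((0,(-1)),(0,0)),((0,0),(0,0))), e3 (((0,0),(0,0)),((0,0),(0,0))))) (Some (e3 ((((-1),0),(1,0)),((0,0),(0,0))), e3 (((0,0),(0,0)),((1,1),(0,(-1)))))) = Some (e3 ((((-1),0),((-1),0)),((0,0),(0,0))), e3 (((0,0),(0,0)),(((-1),(-1)),(0,(-1)))))"
  by (rule EC_chord[where l="(((0,0),(0,0)),((0,(-1)),(0,0)))"]) (simp_all add: z3_def sub3_def rc3_def)

lemma C31: "E_add (Some (e3 (((0,(-1)),(0,0)),((0,0),(0,(-1)))), e3 (((0,(-2)),(0,0)),((0,0),((-1),(-1)))))) Qp = Some (e3 (((0,1),(0,0)),((1,1),(0,0))), e3 (((0,(-2)),(0,0)),((0,(-2)),(0,0))))"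
  unfolding Pp_def Qp_def by (rule EC_chord[where l="(((1,0),(0,0)),(((1/2),(1/2)),(0,(-1/2))))"]) (simp_all add: z3_def sub3_def rc3_def)

lemma C32: "E_add (Some (e3 (((0,(-1)),(0,0)),((0,0),(0,(-1)))), e3 (((0,(-2)),(0,0)),((0,0),((-1),(-1)))))) (Some (e3 ((((-1),0),(0,0)),((0,0),(0,0))), e3 (((0,0),(0,0)),((0,0),(0,0))))) = Some (e3 (((0,(-1)),(0,0)),((0,0),(0,1))), e3 (((0,2),(0,0)),((0,0),((-1),(-1)))))"
  by (rule EC_chord[where l="(((1,(-1)),(0,0)),((0,0),(0,0)))"]) (simp_all add: z3_def sub3_def rc3_def)

lemma C33: "E_add (Some (e3 (((0,(-1)),(0,0)),((0,0),(0,(-1)))), e3 (((0,(-2)),(0,0)),((0,0),((-1),(-1)))))) (Some (e3 ((((-1),0),(1,0)),((0,0),(0,0))), e3 (((0,0),(0,0)),((1,1),(0,(-1)))))) = Some (e3 (((0,1),(0,0)),(((-1),(-1)),(0,0))), e3 (((0,2),(0,0)),((0,(-2)),(0,0))))"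
  by (rule EC_chord[where l="(((0,(-1)),(0,0)),(((1/2),(-1/2)),((1/2),0)))"]) (simp_all add: z3_def sub3_def rc3_def)

fun e3p :: "q3 \<times> q3 \<Rightarrow> complex \<times> complex" where "e3p (X,Y) = (e3 X, e3 Y)"
definition tab :: "nat \<times> nat \<Rightarrow> (q3 \<times> q3) option" where
  "tab p = (if p = (0,0) then None else if p = (0,1) then Some (((((-1),0),(1,0)),((0,0),(0,0))), (((0,0),(0,0)),(((-1),(-1)),(0,1)))) else if p = (0,2) then Some (((((-1),0),(0,0)),((0,0),(0,0))), (((0,0),(0,0)),((0,0),(0,0)))) else if p = (0,3) then Some (((((-1),0),(1,0)),((0,0),(0,0))), (((0,0),(0,0)),((1,1),(0,(-1))))) else if p = (1,0) then Some ((((0,(-1)),(0,0)),((0,0),(0,(-1)))), (((0,2),(0,0)),((0,0),(1,1)))) else if p = (1,1) then Some ((((0,1),(0,0)),(((-1),(-1)),(0,0))), (((0,(-2)),(0,0)),((0,2),(0,0)))) else if p = (1,2) then Some ((((0,(-1)),(0,0)),((0,0),(0,1))), (((0,(-2)),(0,0)),((0,0),(1,1)))) else if p = (1,3) then Some ((((0,1),(0,0)),((1,1),(0,0))), (((0,2),(0,0)),((0,2),(0,0)))) else if p = (2,0) then Some ((((0,(-1)),(0,0)),((0,0),(0,0))), (((0,0),(0,0)),((0,0),(0,0)))) else if p = (2,1) then Some (((((-1),0),((-1),0)),((0,0),(0,0))), (((0,0),(0,0)),((1,1),(0,1)))) else if p = (2,2) then Some ((((0,1),(0,0)),((0,0),(0,0))),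 (((0,0),(0,0)),((0,0),(0,0)))) else if p = (2,3) then Some (((((-1),0),((-1),0)),((0,0),(0,0))), (((0,0),(0,0)),(((-1),(-1)),(0,(-1))))) else if p = (3,0) then Some ((((0,(-1)),(0,0)),((0,0),(0,(-1)))), (((0,(-2)),(0,0)),((0,0),((-1),(-1))))) else if p = (3,1) then Some ((((0,1),(0,0)),((1,1),(0,0))), (((0,(-2)),(0,0)),((0,(-2)),(0,0)))) else if p = (3,2) then Some ((((0,(-1)),(0,0)),((0,0),(0,1))), (((0,2),(0,0)),((0,0),((-1),(-1))))) else Some ((((0,1),(0,0)),(((-1),(-1)),(0,0))), (((0,2),(0,0)),((0,(-2)),(0,0)))))"

definition fmap :: "nat \<times> nat \<Rightarrow> ept" where "fmap = (\<lambda>(a, b). E_add (E_smul a Pp) (E_smul b Qp))"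

lemma fv00: "fmap (0,0) = map_option e3p (tab (0,0))"
  by (simp only: fmap_def case_prod_conv Psm Qsm E_add_None1 E_add_None2) (simp add: tab_def Pp_def Qp_def)

lemma fv01: "fmap (0,1) = map_option e3p (tab (0,1))"
  by (simp only: fmap_def case_prod_conv Psm Qsm E_add_None1 E_add_None2) (simp add: tab_def Pp_def Qp_def)

lemma fv02: "fmap (0,2) = map_option e3p (tab (0,2))"
  by (simp only: fmap_def case_prod_conv Psm Qsm E_add_None1 E_add_None2) (simp add: tab_def Pp_def Qp_def)

lemma fv03: "fmap (0,3) = map_option e3p (tab (0,3))"
  by (simp only: fmap_def case_prod_conv Psm Qsm E_add_None1 E_add_None2) (simp add: tab_def Pp_def Qp_def)

lemma fv10: "fmap (1,0) = map_option e3p (tab (1,0))"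
  by (simp only: fmap_def case_prod_conv Psm Qsm E_add_None1 E_add_None2) (simp add: tab_def Pp_def Qp_def)

lemma fv11: "fmap (1,1) = map_option e3p (tab (1,1))"
  by (simp only: fmap_def case_prod_conv Psm Qsm E_add_None1 E_add_None2 C11) (simp add: tab_def Pp_def Qp_def)

lemma fv12: "fmap (1,2) = map_option e3p (tab (1,2))"
  by (simp only: fmap_def case_prod_conv Psm Qsm E_add_None1 E_add_None2 C12) (simp add: tab_def Pp_def Qp_def)

lemma fv13: "fmap (1,3) = map_option e3p (tab (1,3))"
  by (simp only: fmap_def case_prod_conv Psm Qsm E_add_None1 E_add_None2 C13) (simp add: tab_def Pp_def Qp_def)

lemma fv20: "fmap (2,0) = map_option e3p (tab (2,0))"
  by (simp only: fmap_def case_prod_conv Psm Qsm E_add_None1 E_add_None2) (simp add: tab_def Pp_def Qp_def)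

lemma fv21: "fmap (2,1) = map_option e3p (tab (2,1))"
  by (simp only: fmap_def case_prod_conv Psm Qsm E_add_None1 E_add_None2 C21) (simp add: tab_def Pp_def Qp_def)

lemma fv22: "fmap (2,2) = map_option e3p (tab (2,2))"
  by (simp only: fmap_def case_prod_conv Psm Qsm E_add_None1 E_add_None2 C22) (simp add: tab_def Pp_def Qp_def)

lemma fv23: "fmap (2,3) = map_option e3p (tab (2,3))"
  by (simp only: fmap_def case_prod_conv Psm Qsm E_add_None1 E_add_None2 C23) (simp add: tab_def Pp_def Qp_def)

lemma fv30: "fmap (3,0) = map_option e3p (tab (3,0))"
  by (simp only: fmap_def case_prod_conv Psm Qsm E_add_None1 E_add_None2) (simp add: tab_def Pp_def Qp_def)

lemma fv31: "fmap (3,1) = map_option e3p (tab (3,1))"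
  by (simp only: fmap_def case_prod_conv Psm Qsm E_add_None1 E_add_None2 C31) (simp add: tab_def Pp_def Qp_def)

lemma fv32: "fmap (3,2) = map_option e3p (tab (3,2))"
  by (simp only: fmap_def case_prod_conv Psm Qsm E_add_None1 E_add_None2 C32) (simp add: tab_def Pp_def Qp_def)

lemma fv33: "fmap (3,3) = map_option e3p (tab (3,3))"
  by (simp only: fmap_def case_prod_conv Psm Qsm E_add_None1 E_add_None2 C33) (simp add: tab_def Pp_def Qp_def)

lemmas fvs = fv00 fv01 fv02 fv03 fv10 fv11 fv12 fv13 fv20 fv21 fv22 fv23 fv30 fv31 fv32 fv33

definition Dom :: "(nat \<times> nat) set" where "Dom = {0..<4} \<times> {0..<4}"

definition fE3 :: "q3 \<Rightarrow> q3" where "fE3 X = add3 (add3 (add3 (mul3 X (mul3 X X)) (mul3 X X)) X) (rc3 1)"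

lemma fE_e3: "fE (e3 X) = e3 (fE3 X)"
  by (simp add: fE_def fE3_def ev3_add e3_mul ev3_rc power2_eq_square power3_eq_cube)

lemma pts_helper: assumes "fE3 X = mul3 Y Y" "neg3 Y = Y'" "y^2 = fE (e3 X)" shows "y = e3 Y \<or> y = e3 Y'"
proof -
  have "y^2 = (e3 Y)^2" using assms(3) unfolding fE_e3 assms(1) e3_sq .
  hence "y = e3 Y \<or> y = - e3 Y" by (simp add: power2_eq_iff)
  moreover have "- e3 Y = e3 Y'" using arg_cong[OF assms(2), of e3] by (simp only: ev3_neg)
  ultimately show ?thesis by simp
qed

lemma quad: "(x - e3 A)*(x - e3 B) = x*x - e3 (add3 A B) * x + e3 (mul3 A B)"
  by (simp add: ev3_add e3_mul algebra_simps)

lemma FE_fact: "FE x = - ((x*x + 2*x - 1) * (x*x - 2*\<i>*x + 1 - 2*\<i>) * (x*x + 2*\<i>*x + 1 + 2*\<i>))"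
  by (simp add: FE_def NE_def gE_def fE_def algebra_simps power2_eq_square power3_eq_cube)

lemma FE_roots: assumes "FE x = 0"
  shows "x = e3 ((((-1),0),(1,0)),((0,0),(0,0))) \<or> x = e3 ((((-1),0),((-1),0)),((0,0),(0,0)))
    \<or> x = e3 (((0,1),(0,0)),(((-1),(-1)),(0,0))) \<or> x = e3 (((0,1),(0,0)),((1,1),(0,0)))
    \<or> x = e3 (((0,(-1)),(0,0)),((0,0),(0,(-1)))) \<or> x = e3 (((0,(-1)),(0,0)),((0,0),(0,1)))"
proof -
  have q1: "x*x + 2*x - 1 = (x - e3 ((((-1),0),(1,0)),((0,0),(0,0)))) * (x - e3 ((((-1),0),((-1),0)),((0,0),(0,0))))"
    by (subst quad) (simp add: algebra_simps)
  have q2: "x*x - 2*\<i>*x + 1 - 2*\<i> = (x - e3 (((0,1),(0,0)),(((-1),(-1)),(0,0)))) * (x - e3 (((0,1),(0,0)),((1,1),(0,0))))"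
    by (subst quad) (simp add: algebra_simps)
  have q3: "x*x + 2*\<i>*x + 1 + 2*\<i> = (x - e3 (((0,(-1)),(0,0)),((0,0),(0,(-1))))) * (x - e3 (((0,(-1)),(0,0)),((0,0),(0,1))))"
    by (subst quad) (simp add: algebra_simps)
  have "(x*x + 2*x - 1) * (x*x - 2*\<i>*x + 1 - 2*\<i>) * (x*x + 2*\<i>*x + 1 + 2*\<i>) = 0"
    using assms FE_fact by simp
  hence "x*x + 2*x - 1 = 0 \<or> x*x - 2*\<i>*x + 1 - 2*\<i> = 0 \<or> x*x + 2*\<i>*x + 1 + 2*\<i> = 0" by simp
  thus ?thesis unfolding q1 q2 q3 by (simp only: mult_eq_0_iff right_minus_eq) blast
qed
lemma xr_01: assumes "y^2 = fE (e3 ((((-1),0),(1,0)),((0,0),(0,0))))" shows "Some (e3 ((((-1),0),(1,0)),((0,0),(0,0))), y) \<in> fmap ` Dom"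
proof -
  have "y = e3 (((0,0),(0,0)),(((-1),(-1)),(0,1))) \<or> y = e3 (((0,0),(0,0)),((1,1),(0,(-1))))" by (rule pts_helper[OF _ _ assms]) (simp_all add: fE3_def rc3_def)
  moreover have "map_option e3p (tab (0,1)) \<in> fmap ` Dom" using imageI[of "(0,1)" Dom fmap] unfolding fv01 by (simp add: Dom_def)
  moreover have "map_option e3p (tab (0,3)) \<in> fmap ` Dom" using imageI[of "(0,3)" Dom fmap] unfolding fv03 by (simp add: Dom_def)
  ultimately show ?thesis by (auto simp: tab_def)
qed

lemma xr_10: assumes "y^2 = fE (e3 (((0,(-1)),(0,0)),((0,0),(0,(-1)))))" shows "Some (e3 (((0,(-1)),(0,0)),((0,0),(0,(-1)))), y) \<in> fmap ` Dom"
proof -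
  have "y = e3 (((0,2),(0,0)),((0,0),(1,1))) \<or> y = e3 (((0,(-2)),(0,0)),((0,0),((-1),(-1))))" by (rule pts_helper[OF _ _ assms]) (simp_all add: fE3_def rc3_def)
  moreover have "map_option e3p (tab (1,0)) \<in> fmap ` Dom" using imageI[of "(1,0)" Dom fmap] unfolding fv10 by (simp add: Dom_def)
  moreover have "map_option e3p (tab (3,0)) \<in> fmap ` Dom" using imageI[of "(3,0)" Dom fmap] unfolding fv30 by (simp add: Dom_def)
  ultimately show ?thesis by (auto simp: tab_def)
qed

lemma xr_11: assumes "y^2 = fE (e3 (((0,1),(0,0)),(((-1),(-1)),(0,0))))" shows "Some (e3 (((0,1),(0,0)),(((-1),(-1)),(0,0))), y) \<in> fmap ` Dom"
proof -
  have "y = e3 (((0,(-2)),(0,0)),((0,2),(0,0))) \<or> y = e3 (((0,2),(0,0)),((0,(-2)),(0,0)))" by (rule pts_helper[OF _ _ assms]) (simp_all add: fE3_def rc3_def)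
  moreover have "map_option e3p (tab (1,1)) \<in> fmap ` Dom" using imageI[of "(1,1)" Dom fmap] unfolding fv11 by (simp add: Dom_def)
  moreover have "map_option e3p (tab (3,3)) \<in> fmap ` Dom" using imageI[of "(3,3)" Dom fmap] unfolding fv33 by (simp add: Dom_def)
  ultimately show ?thesis by (auto simp: tab_def)
qed

lemma xr_12: assumes "y^2 = fE (e3 (((0,(-1)),(0,0)),((0,0),(0,1))))" shows "Some (e3 (((0,(-1)),(0,0)),((0,0),(0,1))), y) \<in> fmap ` Dom"
proof -
  have "y = e3 (((0,(-2)),(0,0)),((0,0),(1,1))) \<or> y = e3 (((0,2),(0,0)),((0,0),((-1),(-1))))" by (rule pts_helper[OF _ _ assms]) (simp_all add: fE3_def rc3_def)
  moreover have "map_option e3p (tab (1,2)) \<in> fmap ` Dom" using imageI[of "(1,2)" Dom fmap] unfolding fv12 by (simp add: Dom_def)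
  moreover have "map_option e3p (tab (3,2)) \<in> fmap ` Dom" using imageI[of "(3,2)" Dom fmap] unfolding fv32 by (simp add: Dom_def)
  ultimately show ?thesis by (auto simp: tab_def)
qed

lemma xr_13: assumes "y^2 = fE (e3 (((0,1),(0,0)),((1,1),(0,0))))" shows "Some (e3 (((0,1),(0,0)),((1,1),(0,0))), y) \<in> fmap ` Dom"
proof -
  have "y = e3 (((0,2),(0,0)),((0,2),(0,0))) \<or> y = e3 (((0,(-2)),(0,0)),((0,(-2)),(0,0)))" by (rule pts_helper[OF _ _ assms]) (simp_all add: fE3_def rc3_def)
  moreover have "map_option e3p (tab (1,3)) \<in> fmap ` Dom" using imageI[of "(1,3)" Dom fmap] unfolding fv13 by (simp add: Dom_def)
  moreover have "map_option e3p (tab (3,1)) \<in> fmap ` Dom" using imageI[of "(3,1)" Dom fmap] unfolding fv31 by (simp add: Dom_def)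
  ultimately show ?thesis by (auto simp: tab_def)
qed

lemma xr_21: assumes "y^2 = fE (e3 ((((-1),0),((-1),0)),((0,0),(0,0))))" shows "Some (e3 ((((-1),0),((-1),0)),((0,0),(0,0))), y) \<in> fmap ` Dom"
proof -
  have "y = e3 (((0,0),(0,0)),((1,1),(0,1))) \<or> y = e3 (((0,0),(0,0)),(((-1),(-1)),(0,(-1))))" by (rule pts_helper[OF _ _ assms]) (simp_all add: fE3_def rc3_def)
  moreover have "map_option e3p (tab (2,1)) \<in> fmap ` Dom" using imageI[of "(2,1)" Dom fmap] unfolding fv21 by (simp add: Dom_def)
  moreover have "map_option e3p (tab (2,3)) \<in> fmap ` Dom" using imageI[of "(2,3)" Dom fmap] unfolding fv23 by (simp add: Dom_def)
  ultimately show ?thesis by (auto simp: tab_def)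
qed

lemma FE_fact2: "FE x = - (((x - e3 ((((-1),0),(1,0)),((0,0),(0,0)))) * (x - e3 ((((-1),0),((-1),0)),((0,0),(0,0)))))
   * ((x - e3 (((0,1),(0,0)),(((-1),(-1)),(0,0)))) * (x - e3 (((0,1),(0,0)),((1,1),(0,0)))))
   * ((x - e3 (((0,(-1)),(0,0)),((0,0),(0,(-1))))) * (x - e3 (((0,(-1)),(0,0)),((0,0),(0,1))))))"
proof -
  have q1: "x*x + 2*x - 1 = (x - e3 ((((-1),0),(1,0)),((0,0),(0,0)))) * (x - e3 ((((-1),0),((-1),0)),((0,0),(0,0))))"
    by (subst quad) (simp add: algebra_simps)
  have q2: "x*x - 2*\<i>*x + 1 - 2*\<i> = (x - e3 (((0,1),(0,0)),(((-1),(-1)),(0,0)))) * (x - e3 (((0,1),(0,0)),((1,1),(0,0))))"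
    by (subst quad) (simp add: algebra_simps)
  have q3: "x*x + 2*\<i>*x + 1 + 2*\<i> = (x - e3 (((0,(-1)),(0,0)),((0,0),(0,(-1))))) * (x - e3 (((0,(-1)),(0,0)),((0,0),(0,1))))"
    by (subst quad) (simp add: algebra_simps)
  show ?thesis unfolding FE_fact q1[symmetric] q2[symmetric] q3[symmetric] ..
qed

lemma FE_zeroI:
  "FE (e3 ((((-1),0),(1,0)),((0,0),(0,0)))) = 0"
  "FE (e3 ((((-1),0),((-1),0)),((0,0),(0,0)))) = 0"
  "FE (e3 (((0,1),(0,0)),(((-1),(-1)),(0,0)))) = 0"
  "FE (e3 (((0,1),(0,0)),((1,1),(0,0)))) = 0"
  "FE (e3 (((0,(-1)),(0,0)),((0,0),(0,(-1))))) = 0"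
  "FE (e3 (((0,(-1)),(0,0)),((0,0),(0,1)))) = 0"
  by (simp_all only: FE_fact2 diff_self mult_zero_left mult_zero_right minus_zero)

lemma inE4: assumes "mul3 Y Y = fE3 X" "e3 Y = 0 \<or> FE (e3 X) = 0" shows "Some (e3 X, e3 Y) \<in> E4"
proof -
  have on: "(e3 Y)^2 = fE (e3 X)" unfolding e3_sq fE_e3 assms(1) ..
  hence "on_E (Some (e3 X, e3 Y))" by (simp add: on_E_def fE_def)
  moreover have "E_smul 4 (Some (e3 X, e3 Y)) = None" using E4_char[OF on] assms(2) by simp
  ultimately show ?thesis by (simp add: E4_def)
qed

lemma None_E4: "None \<in> E4"
  by (simp add: E4_def on_E_def E_smul4)

lemma mem_helper: "x = e3 R \<Longrightarrow> y^2 = fE x \<Longrightarrow> (y^2 = fE (e3 R) \<Longrightarrow> Some (e3 R, y) \<in> A) \<Longrightarrow> Some (x,y) \<in> A"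
  by simp

lemma fE_fact: "fE x = (x + 1) * (x - \<i>) * (x + \<i>)"
  by (simp add: fE_def algebra_simps power2_eq_square power3_eq_cube)
lemma tv00: "tab (0,0) = None" by (simp add: tab_def)

lemma tv01: "tab (0,1) = Some (((((-1),0),(1,0)),((0,0),(0,0))), (((0,0),(0,0)),(((-1),(-1)),(0,1))))" by (simp add: tab_def)

lemma tin01: "map_option e3p (tab (0,1)) \<in> E4"
  unfolding tv01 by (simp only: option.map e3p.simps) (rule inE4, simp add: fE3_def rc3_def, rule disjI2, rule FE_zeroI)

lemma tv02: "tab (0,2) = Some (((((-1),0),(0,0)),((0,0),(0,0))), (((0,0),(0,0)),((0,0),(0,0))))" by (simp add: tab_def)

lemma tin02: "map_option e3p (tab (0,2)) \<in> E4"
  unfolding tv02 by (simp only: option.map e3p.simps) (rule inE4, simp add: fE3_def rc3_def, rule disjI1, simp)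

lemma tv03: "tab (0,3) = Some (((((-1),0),(1,0)),((0,0),(0,0))), (((0,0),(0,0)),((1,1),(0,(-1)))))" by (simp add: tab_def)

lemma tin03: "map_option e3p (tab (0,3)) \<in> E4"
  unfolding tv03 by (simp only: option.map e3p.simps) (rule inE4, simp add: fE3_def rc3_def, rule disjI2, rule FE_zeroI)

lemma tv10: "tab (1,0) = Some ((((0,(-1)),(0,0)),((0,0),(0,(-1)))), (((0,2),(0,0)),((0,0),(1,1))))" by (simp add: tab_def)

lemma tin10: "map_option e3p (tab (1,0)) \<in> E4"
  unfolding tv10 by (simp only: option.map e3p.simps) (rule inE4, simp add: fE3_def rc3_def, rule disjI2, rule FE_zeroI)

lemma tv11: "tab (1,1) = Some ((((0,1),(0,0)),(((-1),(-1)),(0,0))), (((0,(-2)),(0,0)),((0,2),(0,0))))" by (simp add: tab_def)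

lemma tin11: "map_option e3p (tab (1,1)) \<in> E4"
  unfolding tv11 by (simp only: option.map e3p.simps) (rule inE4, simp add: fE3_def rc3_def, rule disjI2, rule FE_zeroI)

lemma tv12: "tab (1,2) = Some ((((0,(-1)),(0,0)),((0,0),(0,1))), (((0,(-2)),(0,0)),((0,0),(1,1))))" by (simp add: tab_def)

lemma tin12: "map_option e3p (tab (1,2)) \<in> E4"
  unfolding tv12 by (simp only: option.map e3p.simps) (rule inE4, simp add: fE3_def rc3_def, rule disjI2, rule FE_zeroI)

lemma tv13: "tab (1,3) = Some ((((0,1),(0,0)),((1,1),(0,0))), (((0,2),(0,0)),((0,2),(0,0))))" by (simp add: tab_def)

lemma tin13: "map_option e3p (tab (1,3)) \<in> E4"
  unfolding tv13 by (simp only: option.map e3p.simps) (rule inE4, simp add: fE3_def rc3_def, rule disjI2, rule FE_zeroI)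

lemma tv20: "tab (2,0) = Some ((((0,(-1)),(0,0)),((0,0),(0,0))), (((0,0),(0,0)),((0,0),(0,0))))" by (simp add: tab_def)

lemma tin20: "map_option e3p (tab (2,0)) \<in> E4"
  unfolding tv20 by (simp only: option.map e3p.simps) (rule inE4, simp add: fE3_def rc3_def, rule disjI1, simp)

lemma tv21: "tab (2,1) = Some (((((-1),0),((-1),0)),((0,0),(0,0))), (((0,0),(0,0)),((1,1),(0,1))))" by (simp add: tab_def)

lemma tin21: "map_option e3p (tab (2,1)) \<in> E4"
  unfolding tv21 by (simp only: option.map e3p.simps) (rule inE4, simp add: fE3_def rc3_def, rule disjI2, rule FE_zeroI)

lemma tv22: "tab (2,2) = Some ((((0,1),(0,0)),((0,0),(0,0))), (((0,0),(0,0)),((0,0),(0,0))))" by (simp add: tab_def)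

lemma tin22: "map_option e3p (tab (2,2)) \<in> E4"
  unfolding tv22 by (simp only: option.map e3p.simps) (rule inE4, simp add: fE3_def rc3_def, rule disjI1, simp)

lemma tv23: "tab (2,3) = Some (((((-1),0),((-1),0)),((0,0),(0,0))), (((0,0),(0,0)),(((-1),(-1)),(0,(-1)))))" by (simp add: tab_def)

lemma tin23: "map_option e3p (tab (2,3)) \<in> E4"
  unfolding tv23 by (simp only: option.map e3p.simps) (rule inE4, simp add: fE3_def rc3_def, rule disjI2, rule FE_zeroI)

lemma tv30: "tab (3,0) = Some ((((0,(-1)),(0,0)),((0,0),(0,(-1)))), (((0,(-2)),(0,0)),((0,0),((-1),(-1)))))" by (simp add: tab_def)

lemma tin30: "map_option e3p (tab (3,0)) \<in> E4"
  unfolding tv30 by (simp only: option.map e3p.simps) (rule inE4, simp add: fE3_def rc3_def, rule disjI2, rule FE_zeroI)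

lemma tv31: "tab (3,1) = Some ((((0,1),(0,0)),((1,1),(0,0))), (((0,(-2)),(0,0)),((0,(-2)),(0,0))))" by (simp add: tab_def)

lemma tin31: "map_option e3p (tab (3,1)) \<in> E4"
  unfolding tv31 by (simp only: option.map e3p.simps) (rule inE4, simp add: fE3_def rc3_def, rule disjI2, rule FE_zeroI)

lemma tv32: "tab (3,2) = Some ((((0,(-1)),(0,0)),((0,0),(0,1))), (((0,2),(0,0)),((0,0),((-1),(-1)))))" by (simp add: tab_def)

lemma tin32: "map_option e3p (tab (3,2)) \<in> E4"
  unfolding tv32 by (simp only: option.map e3p.simps) (rule inE4, simp add: fE3_def rc3_def, rule disjI2, rule FE_zeroI)

lemma tv33: "tab (3,3) = Some ((((0,1),(0,0)),(((-1),(-1)),(0,0))), (((0,2),(0,0)),((0,(-2)),(0,0))))" by (simp add: tab_def)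

lemma tin33: "map_option e3p (tab (3,3)) \<in> E4"
  unfolding tv33 by (simp only: option.map e3p.simps) (rule inE4, simp add: fE3_def rc3_def, rule disjI2, rule FE_zeroI)

lemma Dom_list: "Dom = set [(0,0),(0,1),(0,2),(0,3),(1,0),(1,1),(1,2),(1,3),(2,0),(2,1),(2,2),(2,3),(3,0),(3,1),(3,2),(3,3)]"
proof -
  have a: "{0..<4::nat} = {0,1,2,3}" by (auto simp: numeral_eq_Suc less_Suc_eq)
  show ?thesis unfolding Dom_def a by auto
qed

lemma fmap_tab: "p \<in> Dom \<Longrightarrow> fmap p = map_option e3p (tab p)"
  unfolding Dom_list using fvs by auto

lemma img_sub: "fmap ` Dom \<subseteq> E4"
proof
  fix P assume "P \<in> fmap ` Dom"
  then obtain p where p: "p \<in> Dom" "P = fmap p" by auto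
  hence "P = map_option e3p (tab p)" using fmap_tab by simp
  moreover have "map_option e3p (tab p) \<in> E4" using p(1) unfolding Dom_list
    using tin01 tin02 tin03 tin10 tin11 tin12 tin13 tin20 tin21 tin22 tin23 tin30 tin31 tin32 tin33
      None_E4 tv00 by auto
  ultimately show "P \<in> E4" by simp
qed

lemma mem_sub: "E4 \<subseteq> fmap ` Dom"
proof
  fix P assume P: "P \<in> E4"
  show "P \<in> fmap ` Dom"
  proof (cases P)
    case None
    have "fmap (0,0) = None" using fv00 tv00 by simp
    moreover have "(0,0) \<in> Dom" by (simp add: Dom_def)
    ultimately show ?thesis using None by (metis image_eqI)
  next
    case (Some xy)
    then obtain x y where S: "P = Some (x,y)" by (cases xy) auto
    have on: "y^2 = fE x" using P S by (simp add: E4_def on_E_def fE_def)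
    have "E_smul 4 (Some (x,y)) = None" using P S by (simp add: E4_def)
    hence c: "y = 0 \<or> FE x = 0" using E4_char[OF on] by simp
    show ?thesis
    proof (cases "y = 0")
      case True
      hence "fE x = 0" using on by simp
      hence "(x + 1) * (x - \<i>) * (x + \<i>) = 0" by (simp only: fE_fact)
      hence x0: "x + 1 = 0 \<or> x - \<i> = 0 \<or> x + \<i> = 0" by (simp only: mult_eq_0_iff) blast
      have m: "map_option e3p (tab (0,2)) \<in> fmap ` Dom" "map_option e3p (tab (2,2)) \<in> fmap ` Dom"
        "map_option e3p (tab (2,0)) \<in> fmap ` Dom"
        using imageI[of "(0,2)" Dom fmap] imageI[of "(2,2)" Dom fmap] imageI[of "(2,0)" Dom fmap]
        unfolding fv02 fv22 fv20 by (simp_all add: Dom_def)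
      have e: "map_option e3p (tab (0,2)) = Some (-1, 0)" "map_option e3p (tab (2,2)) = Some (\<i>, 0)"
        "map_option e3p (tab (2,0)) = Some (-\<i>, 0)" unfolding tv02 tv22 tv20 by simp_all
      from x0 show ?thesis
      proof (elim disjE)
        assume "x + 1 = 0" hence "x = -1" by (simp add: eq_neg_iff_add_eq_0)
        thus ?thesis using m(1) e(1) True S by simp
      next
        assume "x - \<i> = 0" hence "x = \<i>" by simp
        thus ?thesis using m(2) e(2) True S by simp
      next
        assume "x + \<i> = 0" hence "x = - \<i>" by (simp add: eq_neg_iff_add_eq_0)
        thus ?thesis using m(3) e(3) True S by simp
      qed
    next
      case False
      hence "FE x = 0" using c by simp
      from FE_roots[OF this] show ?thesis unfolding S
        apply (elim disjE)
        apply (rule mem_helper[OF _ on xr_01], assumption, assumption)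
        apply (rule mem_helper[OF _ on xr_21], assumption, assumption)
        apply (rule mem_helper[OF _ on xr_11], assumption, assumption)
        apply (rule mem_helper[OF _ on xr_13], assumption, assumption)
        apply (rule mem_helper[OF _ on xr_10], assumption, assumption)
        apply (rule mem_helper[OF _ on xr_12], assumption, assumption)
        done
    qed
  qed
qed

lemma E4_img: "fmap ` Dom = E4" using img_sub mem_sub by blast

lemma e3p_inj: "inj e3p"
proof (rule injI)
  fix a b assume "e3p a = e3p b"
  moreover obtain a1 a2 b1 b2 where ab: "a = (a1,a2)" "b = (b1,b2)" by (cases a, cases b)
  ultimately have "e3 a1 = e3 b1" "e3 a2 = e3 b2" by (simp_all only: e3p.simps prod.inject)
  thus "a = b" using ab e3_inj by simp
qed

lemma tab_inj: "inj_on tab Dom"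
proof -
  have "distinct (map tab [(0,0),(0,1),(0,2),(0,3),(1,0),(1,1),(1,2),(1,3),(2,0),(2,1),(2,2),(2,3),(3,0),(3,1),(3,2),(3,3)])"
    by (simp only: list.map tv00 tv01 tv02 tv03 tv10 tv11 tv12 tv13 tv20 tv21 tv22 tv23 tv30 tv31 tv32 tv33) simp
  thus ?thesis unfolding Dom_list by (simp only: distinct_map)
qed

lemma fmap_inj: "inj_on fmap Dom"
proof (rule inj_onI)
  fix p q assume pq: "p \<in> Dom" "q \<in> Dom" "fmap p = fmap q"
  hence "map_option e3p (tab p) = map_option e3p (tab q)" using fmap_tab by simp
  hence "tab p = tab q" using option.inj_map[OF e3p_inj] unfolding inj_def by blast
  thus "p = q" using tab_inj pq unfolding inj_on_def by blast
qed

lemma basis: "E4_basis Pp Qp"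
proof -
  have "Pp = fmap (1,0)" "Qp = fmap (0,1)" by (simp_all only: fmap_def case_prod_conv Psm Qsm E_add_None1 E_add_None2)
  moreover have "(1,0) \<in> Dom" "(0,1) \<in> Dom" by (simp_all add: Dom_def)
  ultimately have "Pp \<in> E4" "Qp \<in> E4" using img_sub by auto
  moreover have "bij_betw fmap Dom E4" unfolding bij_betw_def using fmap_inj E4_img by simp
  ultimately show ?thesis unfolding E4_basis_def fmap_def[symmetric] Dom_def by simp
qed


definition Ti :: q3 where "Ti = (((0,1),(0,0)),((0,0),(0,0)))"
definition Ts :: q3 where "Ts = (((0,0),(1,0)),((0,0),(0,0)))"
definition Ta :: q3 where "Ta = (((0,0),(0,0)),((1,0),(0,0)))"
definition Ri :: q3 where "Ri = (((0,-1),(0,0)),((0,0),(0,0)))"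
definition Rs :: q3 where "Rs = (((0,0),(-1,0)),((0,0),(0,0)))"
definition Ra :: q3 where "Ra = (((0,0),(0,0)),((0,0),(1/2,-1/2)))"

lemma gens_e3: "e3 Ti = \<i>" "e3 Ts = sqrt2" "e3 Ta = alpha" "e3 Ri = - \<i>" "e3 Rs = - sqrt2"
  by (simp_all add: Ti_def Ts_def Ta_def Ri_def Rs_def)

lemma sqrt2_nz: "sqrt2 \<noteq> 0" using sqrt2_sq by auto

lemma Ra_e3: "e3 Ra = (1 - \<i>) / sqrt2 * alpha"
proof -
  have h1: "(1 - \<i>) / sqrt2 = (1 - \<i>) * sqrt2 / 2" using sqrt2_sq sqrt2_nz by (simp add: field_simps)
  have h2: "e3 Ra = (1 - \<i>) * sqrt2 / 2 * alpha" by (simp add: Ra_def of_rat_divide of_rat_minus field_simps)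
  show ?thesis by (simp only: h1 h2)
qed

definition autK :: "q3 \<Rightarrow> q3 \<Rightarrow> q3 \<Rightarrow> complex \<Rightarrow> complex" where
  "autK U V W z = ev3 (e3 U) (e3 V) (e3 W) (inv e3 z)"

lemma e3_inj': "inj e3" using e3_inj by (intro injI) auto

lemma autK_e3: "autK U V W (e3 c) = e3 (kapp3 U V W c)"
  unfolding autK_def inv_f_f[OF e3_inj'] kapp3_e3 ..

lemma autK_e3': "autK U V W (e3 c) = ev3 (e3 U) (e3 V) (e3 W) c"
  unfolding autK_def inv_f_f[OF e3_inj'] ..

lemma autK_K3: assumes "z \<in> K3" shows "autK U V W z \<in> K3"
proof -
  obtain c where "z = e3 c" using assms unfolding K3_def by auto
  thus ?thesis unfolding K3_def using rangeI[of e3 "kapp3 U V W c"] by (simp only: autK_e3)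
qed

lemma autK_rat: "autK U V W (of_rat r) = of_rat r"
proof -
  have "inv e3 (of_rat r) = rc3 r" using inv_f_f[OF e3_inj', of "rc3 r"] by (simp only: ev3_rc)
  thus ?thesis unfolding autK_def by (simp only: ev3_rc)
qed

lemma autK_hom:
  assumes "mul3 U U = rc3 (-1)" "mul3 V V = rc3 2" "mul3 W W = add3 (rc3 1) U"
  shows "hom_on K3 (autK U V W)"
proof -
  have r1: "e3 U * e3 U = -1" using arg_cong[OF assms(1), of e3] by (simp add: e3_mul ev3_rc)
  have r2: "e3 V * e3 V = 2" using arg_cong[OF assms(2), of e3] by (simp add: e3_mul ev3_rc)
  have r3: "e3 W * e3 W = 1 + e3 U" using arg_cong[OF assms(3), of e3] by (simp add: e3_mul ev3_rc ev3_add)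
  show ?thesis unfolding hom_on_def K3_def
  proof (intro ballI)
    fix x y assume "x \<in> range e3" "y \<in> range e3"
    then obtain c d where xy: "x = e3 c" "y = e3 d" by auto
    have s: "x + y = e3 (add3 c d)" and m: "x * y = e3 (mul3 c d)" unfolding xy by (simp_all only: ev3_add e3_mul)
    show "autK U V W (x + y) = autK U V W x + autK U V W y \<and> autK U V W (x * y) = autK U V W x * autK U V W y"
      unfolding s m unfolding xy autK_e3' by (simp only: ev3_add ev3_mul[OF r1 r2 r3] simp_thms)
  qed
qed

lemma hom_comp: "hom_on K3 f \<Longrightarrow> f ` K3 \<subseteq> K3 \<Longrightarrow> hom_on K3 g \<Longrightarrow> hom_on K3 (g \<circ> f)"
  unfolding hom_on_def by (auto simp: image_subset_iff)

lemma hom_funpow: "hom_on K3 f \<Longrightarrow> f ` K3 \<subseteq> K3 \<Longrightarrow> hom_on K3 (f ^^ n) \<and> (f ^^ n) ` K3 \<subseteq> K3"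
proof (induction n)
  case 0 thus ?case by (simp add: hom_on_def)
next
  case (Suc n)
  hence "hom_on K3 (f \<circ> (f ^^ n))" using hom_comp by blast
  moreover have "(f \<circ> (f ^^ n)) ` K3 \<subseteq> K3" using Suc by (auto simp: image_subset_iff)
  ultimately show ?case by (simp add: comp_def)
qed

lemma hom_ext:
  assumes "hom_on K3 \<phi>" "\<And>r. \<phi> (of_rat r) = of_rat r" "\<phi> \<i> = e3 U" "\<phi> sqrt2 = e3 V" "\<phi> alpha = e3 W"
  shows "\<phi> (e3 c) = e3 (kapp3 U V W c)"
  using hom_e3[OF assms(1) order.refl assms(2)] assms(3-5) kapp3_e3 by simp

definition "r0 = autK Ri Rs Ra"
definition "s0 = autK Ti Rs Ta"

lemma r0_hom: "hom_on K3 r0" unfolding r0_def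
  by (rule autK_hom) (simp_all add: Ri_def Rs_def Ra_def rc3_def)
lemma s0_hom: "hom_on K3 s0" unfolding s0_def
  by (rule autK_hom) (simp_all add: Ti_def Rs_def Ta_def rc3_def)


lemma id_ext:
  assumes "hom_on K3 \<phi>" "\<And>r. \<phi> (of_rat r) = of_rat r" "\<phi> \<i> = \<i>" "\<phi> sqrt2 = sqrt2" "\<phi> alpha = alpha"
    "z \<in> K3"
  shows "\<phi> z = z"
proof -
  obtain c where "z = e3 c" using assms(6) unfolding K3_def by auto
  thus ?thesis using hom_e3[OF assms(1) order.refl assms(2)] assms(3-5) by simp
qed

lemma autK_inverse:
  assumes h1: "hom_on K3 (autK U V W)" and h2: "hom_on K3 (autK U' V' W')"
    and t: "kapp3 U' V' W' (kapp3 U V W Ti) = Ti" "kapp3 U' V' W' (kapp3 U V W Ts) = Ts"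
      "kapp3 U' V' W' (kapp3 U V W Ta) = Ta"
    and z: "z \<in> K3"
  shows "autK U' V' W' (autK U V W z) = z"
proof -
  have "hom_on K3 (autK U' V' W' \<circ> autK U V W)"
    using hom_comp[OF h1 _ h2] autK_K3 by blast
  moreover have p: "(autK U' V' W' \<circ> autK U V W) (e3 T) = e3 (kapp3 U' V' W' (kapp3 U V W T))" for T
    by (simp only: o_apply autK_e3)
  have "(autK U' V' W' \<circ> autK U V W) \<i> = \<i>" using p[of Ti] unfolding t(1) gens_e3(1) .
  moreover have "(autK U' V' W' \<circ> autK U V W) sqrt2 = sqrt2" using p[of Ts] unfolding t(2) gens_e3(2) .
  moreover have "(autK U' V' W' \<circ> autK U V W) alpha = alpha" using p[of Ta] unfolding t(3) gens_e3(3) .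
  moreover have "(autK U' V' W' \<circ> autK U V W) (of_rat r) = of_rat r" for r by (simp only: o_apply autK_rat)
  ultimately have "(autK U' V' W' \<circ> autK U V W) z = z"
    using id_ext[OF _ _ _ _ _ z] by blast
  thus ?thesis by simp
qed

definition "r0' = autK Ri Rs (neg3 Ra)"

lemma r0'_hom: "hom_on K3 r0'" unfolding r0'_def
  by (rule autK_hom) (simp_all add: Ri_def Rs_def Ra_def rc3_def)

lemma r0_bij: "bij_betw r0 K K"
proof -
  have a: "r0' (r0 z) = z" if "z \<in> K3" for z unfolding r0_def r0'_def
    by (rule autK_inverse[OF r0_hom[unfolded r0_def] r0'_hom[unfolded r0'_def] _ _ _ that])
       (simp_all add: Ri_def Rs_def Ra_def Ti_def Ts_def Ta_def rc3_def)
  have b: "r0 (r0' z) = z" if "z \<in> K3" for z unfolding r0_def r0'_def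
    by (rule autK_inverse[OF r0'_hom[unfolded r0'_def] r0_hom[unfolded r0_def] _ _ _ that])
       (simp_all add: Ri_def Rs_def Ra_def Ti_def Ts_def Ta_def rc3_def)
  have c: "r0 ` K3 \<subseteq> K3" "r0' ` K3 \<subseteq> K3" unfolding r0_def r0'_def using autK_K3 by blast+
  show ?thesis unfolding K_eq using a b c by (intro bij_betw_byWitness[of _ r0']) auto
qed

lemma s0_bij: "bij_betw s0 K K"
proof -
  have a: "s0 (s0 z) = z" if "z \<in> K3" for z unfolding s0_def
    by (rule autK_inverse[OF s0_hom[unfolded s0_def] s0_hom[unfolded s0_def] _ _ _ that])
       (simp_all add: Ri_def Rs_def Ra_def Ti_def Ts_def Ta_def rc3_def)
  have c: "s0 ` K3 \<subseteq> K3" unfolding s0_def using autK_K3 by blast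
  show ?thesis unfolding K_eq using a c by (intro bij_betw_byWitness[of _ s0]) auto
qed

lemma r0_gens: "r0 \<i> = - \<i>" "r0 sqrt2 = - sqrt2" "r0 alpha = (1 - \<i>) / sqrt2 * alpha"
proof -
  have "r0 (e3 Ti) = e3 Ri" "r0 (e3 Ts) = e3 Rs" "r0 (e3 Ta) = e3 Ra"
    unfolding r0_def autK_e3 by (simp_all add: Ri_def Rs_def Ra_def Ti_def Ts_def Ta_def rc3_def)
  thus "r0 \<i> = - \<i>" "r0 sqrt2 = - sqrt2" "r0 alpha = (1 - \<i>) / sqrt2 * alpha"
    by (simp_all only: gens_e3 Ra_e3)
qed

lemma s0_gens: "s0 \<i> = \<i>" "s0 sqrt2 = - sqrt2" "s0 alpha = alpha"
proof -
  have "s0 (e3 Ti) = e3 Ti" "s0 (e3 Ts) = e3 Rs" "s0 (e3 Ta) = e3 Ta"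
    unfolding s0_def autK_e3 by (simp_all add: Ri_def Rs_def Ra_def Ti_def Ts_def Ta_def rc3_def)
  thus "s0 \<i> = \<i>" "s0 sqrt2 = - sqrt2" "s0 alpha = alpha"
    by (simp_all only: gens_e3)
qed

lemma D4_r0s0: "D4_gens r0 s0"
  unfolding D4_gens_def K_aut_def using r0_bij s0_bij r0_hom s0_hom r0_gens s0_gens
  unfolding K_eq hom_on_def by auto


abbreviation "kR \<equiv> kapp3 Ri Rs Ra"
abbreviation "kS \<equiv> kapp3 Ti Rs Ta"

lemma r0_iter: "(r0 ^^ a) (e3 c) = e3 ((kR ^^ a) c)"
  by (induction a) (simp_all add: r0_def autK_e3)
lemma s0_iter: "(s0 ^^ a) (e3 c) = e3 ((kS ^^ a) c)"
  by (induction a) (simp_all add: s0_def autK_e3)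

lemma iter_K3: "(\<And>z. z \<in> K3 \<Longrightarrow> f z \<in> K3) \<Longrightarrow> z \<in> K3 \<Longrightarrow> (f ^^ n) z \<in> K3"
  by (induction n) auto

lemma iter_rat: fixes f :: "complex \<Rightarrow> complex" shows "(\<And>r. f (of_rat r) = of_rat r) \<Longrightarrow> (f ^^ n) (of_rat r) = of_rat r"
  by (induction n) auto

lemma psi_eval:
  "(r0 ^^ a) ((s0 ^^ b) (e3 c)) = ev3 (e3 ((kR ^^ a) ((kS ^^ b) Ti))) (e3 ((kR ^^ a) ((kS ^^ b) Ts)))
      (e3 ((kR ^^ a) ((kS ^^ b) Ta))) c"
proof -
  have r0K: "r0 ` K3 \<subseteq> K3" and s0K: "s0 ` K3 \<subseteq> K3" unfolding r0_def s0_def using autK_K3 by blast+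
  have h: "hom_on K3 ((r0 ^^ a) \<circ> (s0 ^^ b))"
    using hom_comp hom_funpow[OF s0_hom s0K] hom_funpow[OF r0_hom r0K] by blast
  have fr: "((r0 ^^ a) \<circ> (s0 ^^ b)) (of_rat q) = of_rat q" for q
    using iter_rat[of r0] iter_rat[of s0] autK_rat unfolding r0_def s0_def by simp
  have g: "((r0 ^^ a) \<circ> (s0 ^^ b)) (e3 T) = e3 ((kR ^^ a) ((kS ^^ b) T))" for T
    by (simp only: o_apply s0_iter r0_iter)
  show ?thesis using hom_e3[OF h order.refl fr, of c] g[of Ti] g[of Ts] g[of Ta]
    unfolding gens_e3 by simp
qed

lemma D4_agree: assumes "D4_gens r s" "z \<in> K" shows "r z = r0 z" "s z = s0 z"
proof -
  have rs: "K_aut r" "K_aut s" and g: "r \<i> = - \<i>" "r sqrt2 = - sqrt2" "r alpha = (1 - \<i>) / sqrt2 * alpha"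
    "s \<i> = \<i>" "s sqrt2 = - sqrt2" "s alpha = alpha" using assms(1) unfolding D4_gens_def by auto
  have hr: "hom_on K3 r" "hom_on K3 s" using rs unfolding K_aut_def hom_on_def K_eq by auto
  have ir: "inj_on r K3" "inj_on s K3" using rs unfolding K_aut_def K_eq by (auto dest: bij_betw_imp_inj_on)
  have fr: "r (of_rat q) = of_rat q" "s (of_rat q) = of_rat q" for q
    using hom_fixrat[OF hr(1) ir(1) rat_K3] hom_fixrat[OF hr(2) ir(2) rat_K3] by auto
  obtain c where c: "z = e3 c" using assms(2) unfolding K_eq K3_def by auto
  have "r z = ev3 (e3 Ri) (e3 Rs) (e3 Ra) c" unfolding c hom_e3[OF hr(1) order.refl fr(1)] g gens_e3 Ra_e3 ..
  thus "r z = r0 z" unfolding c r0_def autK_e3' .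
  have "s z = ev3 (e3 Ti) (e3 Rs) (e3 Ta) c" unfolding c hom_e3[OF hr(2) order.refl fr(2)] g gens_e3 ..
  thus "s z = s0 z" unfolding c s0_def autK_e3' .
qed

lemma D4_iter: assumes "D4_gens r s" "z \<in> K" shows "((r ^^ a) \<circ> (s ^^ b)) z = (r0 ^^ a) ((s0 ^^ b) z)"
proof -
  have r0K: "\<And>z. z \<in> K3 \<Longrightarrow> r0 z \<in> K3" and s0K: "\<And>z. z \<in> K3 \<Longrightarrow> s0 z \<in> K3"
    unfolding r0_def s0_def using autK_K3 by blast+
  have sb: "(s ^^ b) z = (s0 ^^ b) z \<and> (s0 ^^ b) z \<in> K3" for b
  proof (induction b)
    case 0 thus ?case using assms(2) K_eq by simp
  next
    case (Suc b) thus ?case using D4_agree(2)[OF assms(1)] s0K K_eq by auto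
  qed
  have ra: "(r ^^ a) w = (r0 ^^ a) w" if "w \<in> K3" for w a
  proof (induction a)
    case 0 thus ?case by simp
  next
    case (Suc a)
    have "(r0 ^^ a) w \<in> K3" using iter_K3[OF r0K that] .
    thus ?case using Suc D4_agree(1)[OF assms(1)] K_eq by auto
  qed
  show ?thesis using sb[of b] ra by simp
qed


lemma sigma_basic: assumes "Qbar_aut \<sigma>"
  shows "\<And>c. \<sigma> (e3 c) = ev3 (\<sigma> \<i>) (\<sigma> sqrt2) (\<sigma> alpha) c"
    and "\<sigma> \<i> * \<sigma> \<i> = -1" "\<sigma> sqrt2 * \<sigma> sqrt2 = 2" "\<sigma> alpha * \<sigma> alpha = 1 + \<sigma> \<i>"
proof -
  have h: "hom_on Qbar \<sigma>" using assms unfolding Qbar_aut_def hom_on_def by auto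
  have inj: "inj_on \<sigma> Qbar" using assms unfolding Qbar_aut_def by (auto dest: bij_betw_imp_inj_on)
  have KQ: "K3 \<subseteq> Qbar" using K_Qbar K_eq by simp
  have rq: "of_rat r \<in> Qbar" for r using KQ rat_K3 by blast
  have fr: "\<sigma> (of_rat r) = of_rat r" for r using hom_fixrat[OF h inj rq] .
  show "\<And>c. \<sigma> (e3 c) = ev3 (\<sigma> \<i>) (\<sigma> sqrt2) (\<sigma> alpha) c" using hom_e3[OF h KQ fr] .
  have m: "\<sigma> (x * y) = \<sigma> x * \<sigma> y" "\<sigma> (x + y) = \<sigma> x + \<sigma> y" if "x \<in> K3" "y \<in> K3" for x y
    using h KQ that unfolding hom_on_def by auto
  have "\<sigma> \<i> * \<sigma> \<i> = \<sigma> (of_rat (-1))" using m(1)[OF ii_K3 ii_K3] by simp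
  thus "\<sigma> \<i> * \<sigma> \<i> = -1" using fr[of "-1"] by simp
  have "\<sigma> sqrt2 * \<sigma> sqrt2 = \<sigma> (of_rat 2)" using m(1)[OF sqrt2_K3 sqrt2_K3] sqrt2_sq by simp
  thus "\<sigma> sqrt2 * \<sigma> sqrt2 = 2" using fr[of 2] by simp
  have "\<sigma> alpha * \<sigma> alpha = \<sigma> (of_rat 1 + \<i>)" using m(1)[OF alpha_K3 alpha_K3] alpha_sq by simp
  also have "\<dots> = 1 + \<sigma> \<i>" using m(2)[OF rat_K3 ii_K3, of 1] fr[of 1] by simp
  finally show "\<sigma> alpha * \<sigma> alpha = 1 + \<sigma> \<i>" .
qed

lemma part2_case:
  assumes "D4_gens r s" "\<And>c. \<sigma> (e3 c) = ev3 (e3 A) (e3 B) (e3 C) c"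
    "(kR ^^ a) ((kS ^^ b) Ti) = A" "(kR ^^ a) ((kS ^^ b) Ts) = B" "(kR ^^ a) ((kS ^^ b) Ta) = C"
  shows "\<forall>z\<in>K. \<sigma> z = ((r ^^ a) \<circ> (s ^^ b)) z"
proof
  fix z assume z: "z \<in> K"
  then obtain c where c: "z = e3 c" unfolding K_eq K3_def by auto
  show "\<sigma> z = ((r ^^ a) \<circ> (s ^^ b)) z"
    unfolding D4_iter[OF assms(1) z] unfolding c psi_eval assms(3-5) assms(2) ..
qed

lemma Ra_sq: "e3 Ra * e3 Ra = 1 - \<i>"
proof -
  have "e3 Ra * e3 Ra = e3 (mul3 Ra Ra)" by (simp only: e3_mul)
  also have "mul3 Ra Ra = (((1,-1),(0,0)),((0,0),(0,0)))" by (simp add: Ra_def)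
  finally show ?thesis by simp
qed

lemma ex_helper: "\<forall>z\<in>K. \<sigma> z = ((r^^a) \<circ> (s^^b)) z \<Longrightarrow> a < 4 \<Longrightarrow> b < (2::nat) \<Longrightarrow>
  \<exists>a<4. \<exists>b<2. \<forall>z\<in>K. \<sigma> z = ((r ^^ a) \<circ> (s ^^ b)) z" by blast

lemma part2: assumes "D4_gens r s" "Qbar_aut \<sigma>"
  shows "\<exists>a<4. \<exists>b<2. \<forall>z\<in>K. \<sigma> z = ((r ^^ a) \<circ> (s ^^ b)) z"
proof -
  note sb = sigma_basic[OF assms(2)]
  have di: "\<sigma> \<i> = e3 Ti \<or> \<sigma> \<i> = e3 Ri" using sb(2) unfolding gens_e3
    by (metis ii_sq square_eq_iff)
  have ds: "\<sigma> sqrt2 = e3 Ts \<or> \<sigma> sqrt2 = e3 Rs" using sb(3) unfolding gens_e3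
    by (metis sqrt2_sq square_eq_iff)
  have en: "- e3 Ta = e3 (neg3 Ta)" "- e3 Ra = e3 (neg3 Ra)" by (simp_all only: ev3_neg)
  have da: "(\<sigma> \<i> = e3 Ti \<longrightarrow> \<sigma> alpha = e3 Ta \<or> \<sigma> alpha = e3 (neg3 Ta)) \<and>
            (\<sigma> \<i> = e3 Ri \<longrightarrow> \<sigma> alpha = e3 Ra \<or> \<sigma> alpha = e3 (neg3 Ra))"
  proof (intro conjI impI)
    assume "\<sigma> \<i> = e3 Ti"
    hence "\<sigma> alpha * \<sigma> alpha = e3 Ta * e3 Ta" using sb(4) alpha_sq gens_e3 by simp
    thus "\<sigma> alpha = e3 Ta \<or> \<sigma> alpha = e3 (neg3 Ta)" unfolding en(1)[symmetric] square_eq_iff .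
  next
    assume "\<sigma> \<i> = e3 Ri"
    hence "\<sigma> alpha * \<sigma> alpha = e3 Ra * e3 Ra" using sb(4) Ra_sq gens_e3 by simp
    thus "\<sigma> alpha = e3 Ra \<or> \<sigma> alpha = e3 (neg3 Ra)" unfolding en(2)[symmetric] square_eq_iff .
  qed
  note defs = Ri_def Rs_def Ra_def Ti_def Ts_def Ta_def rc3_def numeral_eq_Suc
  from di show ?thesis
  proof
    assume i: "\<sigma> \<i> = e3 Ti"
    hence a: "\<sigma> alpha = e3 Ta \<or> \<sigma> alpha = e3 (neg3 Ta)" using da by simp
    from ds show ?thesis
    proof
      assume s: "\<sigma> sqrt2 = e3 Ts"
      from a show ?thesis
      proof
        assume "\<sigma> alpha = e3 Ta"
        hence "\<forall>z\<in>K. \<sigma> z = ((r ^^ 0) \<circ> (s ^^ 0)) z" using sb(1) i s by (intro part2_case[OF assms(1)]) (simp_all add: defs)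
        thus ?thesis by (rule ex_helper) simp_all
      next
        assume "\<sigma> alpha = e3 (neg3 Ta)"
        hence "\<forall>z\<in>K. \<sigma> z = ((r ^^ 2) \<circ> (s ^^ 0)) z" using sb(1) i s by (intro part2_case[OF assms(1)]) (simp_all add: defs)
        thus ?thesis by (rule ex_helper) simp_all
      qed
    next
      assume s: "\<sigma> sqrt2 = e3 Rs"
      from a show ?thesis
      proof
        assume "\<sigma> alpha = e3 Ta"
        hence "\<forall>z\<in>K. \<sigma> z = ((r ^^ 0) \<circ> (s ^^ 1)) z" using sb(1) i s by (intro part2_case[OF assms(1)]) (simp_all add: defs)
        thus ?thesis by (rule ex_helper) simp_all
      next
        assume "\<sigma> alpha = e3 (neg3 Ta)"
        hence "\<forall>z\<in>K. \<sigma> z = ((r ^^ 2) \<circ> (s ^^ 1)) z" using sb(1) i s by (intro part2_case[OF assms(1)]) (simp_all add: defs)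
        thus ?thesis by (rule ex_helper) simp_all
      qed
    qed
  next
    assume i: "\<sigma> \<i> = e3 Ri"
    hence a: "\<sigma> alpha = e3 Ra \<or> \<sigma> alpha = e3 (neg3 Ra)" using da by simp
    from ds show ?thesis
    proof
      assume s: "\<sigma> sqrt2 = e3 Ts"
      from a show ?thesis
      proof
        assume "\<sigma> alpha = e3 Ra"
        hence "\<forall>z\<in>K. \<sigma> z = ((r ^^ 1) \<circ> (s ^^ 1)) z" using sb(1) i s by (intro part2_case[OF assms(1)]) (simp_all add: defs)
        thus ?thesis by (rule ex_helper) simp_all
      next
        assume "\<sigma> alpha = e3 (neg3 Ra)"
        hence "\<forall>z\<in>K. \<sigma> z = ((r ^^ 3) \<circ> (s ^^ 1)) z" using sb(1) i s by (intro part2_case[OF assms(1)]) (simp_all add: defs)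
        thus ?thesis by (rule ex_helper) simp_all
      qed
    next
      assume s: "\<sigma> sqrt2 = e3 Rs"
      from a show ?thesis
      proof
        assume "\<sigma> alpha = e3 Ra"
        hence "\<forall>z\<in>K. \<sigma> z = ((r ^^ 1) \<circ> (s ^^ 0)) z" using sb(1) i s by (intro part2_case[OF assms(1)]) (simp_all add: defs)
        thus ?thesis by (rule ex_helper) simp_all
      next
        assume "\<sigma> alpha = e3 (neg3 Ra)"
        hence "\<forall>z\<in>K. \<sigma> z = ((r ^^ 3) \<circ> (s ^^ 0)) z" using sb(1) i s by (intro part2_case[OF assms(1)]) (simp_all add: defs)
        thus ?thesis by (rule ex_helper) simp_all
      qed
    qed
  qed
qed


lemma funpow_period: assumes "(f ^^ p) x = x" shows "(f ^^ n) x = (f ^^ (n mod p)) x"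
proof -
  have k: "(f ^^ (p * k)) x = x" for k
  proof (induction k)
    case 0 thus ?case by simp
  next
    case (Suc k)
    have e: "p * Suc k = p * k + p" by simp
    have "(f ^^ (p * Suc k)) x = (f ^^ (p * k)) ((f ^^ p) x)" unfolding e funpow_add o_apply ..
    thus ?case using Suc assms by simp
  qed
  have e: "n = n mod p + p * (n div p)" by simp
  have "(f ^^ n) x = (f ^^ (n mod p + p * (n div p))) x" using e by simp
  also have "\<dots> = (f ^^ (n mod p)) ((f ^^ (p * (n div p))) x)" unfolding funpow_add o_apply ..
  finally show ?thesis using k by simp
qed

fun mm4 :: "mat2 \<Rightarrow> mat2" where "mm4 (a,b,c,d) = (a mod 4, b mod 4, c mod 4, d mod 4)"

lemma E_ismul_mod: "E_ismul (k mod 4) P = E_ismul k P" by (simp add: E_ismul_def)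

lemma acts_by_mm4: "acts_by \<sigma> P Q M = acts_by \<sigma> P Q (mm4 M)"
  by (cases M) (simp add: acts_by_def E_ismul_mod)

lemma mod4_entry: "(a*b + c*d) mod (4::int) = ((a mod 4)*(b mod 4) + (c mod 4)*(d mod 4)) mod 4"
proof -
  have "((a mod 4)*(b mod 4) + (c mod 4)*(d mod 4)) mod 4 = (((a mod 4)*(b mod 4)) mod 4 + ((c mod 4)*(d mod 4)) mod 4) mod (4::int)"
    by (rule mod_add_eq[symmetric])
  also have "\<dots> = ((a*b) mod 4 + (c*d) mod 4) mod 4" by (simp only: mod_mult_eq)
  also have "\<dots> = (a*b + c*d) mod 4" by (rule mod_add_eq)
  finally show ?thesis by simp
qed
lemma mm4_mult: "mm4 (mat2_mult A B) = mm4 (mat2_mult (mm4 A) (mm4 B))"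
proof -
  obtain a b c d where A: "A = (a,b,c,d)" by (cases A)
  obtain e f g h where B: "B = (e,f,g,h)" by (cases B)
  show ?thesis unfolding A B by (simp only: mat2_mult_def mm4.simps prod.case mod4_entry[symmetric])
qed
lemma mat2_assoc: "mat2_mult A (mat2_mult B C) = mat2_mult (mat2_mult A B) C"
proof -
  obtain a b c d where A: "A = (a,b,c,d)" by (cases A)
  obtain e f g h where B: "B = (e,f,g,h)" by (cases B)
  obtain i j k l where C: "C = (i,j,k,l)" by (cases C)
  show ?thesis unfolding A B C by (simp add: mat2_mult_def algebra_simps)
qed
lemma mat2_id_left: "mat2_mult mat2_id B = B" by (cases B) (simp add: mat2_mult_def mat2_id_def)

lemma mat2_pow_mult: "(mat2_mult A ^^ k) Y = mat2_mult (mat2_pow A k) Y"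
  by (induction k) (simp_all add: mat2_pow_def mat2_id_left mat2_assoc)

lemma mm4_idem: "mm4 (mm4 M) = mm4 M" by (cases M) simp

lemma mat2_pow_period: assumes "mm4 (mat2_pow A p) = (1,0,0,1)"
  shows "mm4 (mat2_pow A n) = mm4 (mat2_pow A (n mod p))"
proof -
  have k: "mm4 (mat2_pow A (p * k + m)) = mm4 (mat2_pow A m)" for k m
  proof (induction k)
    case 0 thus ?case by simp
  next
    case (Suc k)
    have e: "p * Suc k + m = p + (p * k + m)" by simp
    have "mat2_pow A (p * Suc k + m) = (mat2_mult A ^^ p) (mat2_pow A (p * k + m))"
      unfolding mat2_pow_def e funpow_add o_apply ..
    also have "\<dots> = mat2_mult (mat2_pow A p) (mat2_pow A (p * k + m))" by (rule mat2_pow_mult)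
    finally have "mm4 (mat2_pow A (p * Suc k + m)) = mm4 (mat2_mult (mm4 (mat2_pow A p)) (mm4 (mat2_pow A (p * k + m))))"
      using mm4_mult by simp
    also have "\<dots> = mm4 (mm4 (mat2_pow A (p * k + m)))" unfolding assms
      using mat2_id_left[unfolded mat2_id_def] by simp
    also have "\<dots> = mm4 (mat2_pow A (p * k + m))" by (rule mm4_idem)
    finally show ?case using Suc by simp
  qed
  have "n = p * (n div p) + n mod p" by simp
  hence "mm4 (mat2_pow A n) = mm4 (mat2_pow A (p * (n div p) + n mod p))" by simp
  thus ?thesis using k[of "n div p" "n mod p"] by simp
qed

lemma rho_r_4: "mm4 (mat2_pow rho_r 4) = (1,0,0,1)"
  by (simp add: mat2_pow_def rho_r_def mat2_mult_def mat2_id_def numeral_eq_Suc)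
lemma rho_s_2: "mm4 (mat2_pow rho_s 2) = (1,0,0,1)"
  by (simp add: mat2_pow_def rho_s_def mat2_mult_def mat2_id_def numeral_eq_Suc)

lemma mat_red: "mm4 (mat2_mult (mat2_pow rho_r a) (mat2_pow rho_s b))
  = mm4 (mat2_mult (mat2_pow rho_r (a mod 4)) (mat2_pow rho_s (b mod 2)))"
proof -
  have "mm4 (mat2_mult (mat2_pow rho_r a) (mat2_pow rho_s b)) = mm4 (mat2_mult (mm4 (mat2_pow rho_r a)) (mm4 (mat2_pow rho_s b)))"
    by (rule mm4_mult)
  also have "\<dots> = mm4 (mat2_mult (mm4 (mat2_pow rho_r (a mod 4))) (mm4 (mat2_pow rho_s (b mod 2))))"
    unfolding mat2_pow_period[OF rho_r_4, of a] mat2_pow_period[OF rho_s_2, of b] ..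
  also have "\<dots> = mm4 (mat2_mult (mat2_pow rho_r (a mod 4)) (mat2_pow rho_s (b mod 2)))"
    by (rule mm4_mult[symmetric])
  finally show ?thesis .
qed

lemma acts_fmap: assumes "pt_act \<sigma> Pp = fmap (nat m11, nat m21)" "pt_act \<sigma> Qp = fmap (nat m12, nat m22)"
  "0 \<le> m11" "m11 < 4" "0 \<le> m12" "m12 < 4" "0 \<le> m21" "m21 < 4" "0 \<le> m22" "m22 < 4"
  shows "acts_by \<sigma> Pp Qp (m11, m12, m21, m22)"
  using assms by (simp add: acts_by_def E_ismul_def fmap_def)

lemma act_pt: assumes "\<And>c. \<sigma> (e3 c) = e3 (kapp3 G1 G2 G3 c)" "tab p = Some (X1,Y1)"
  "kapp3 G1 G2 G3 X = X1" "kapp3 G1 G2 G3 Y = Y1" "p \<in> Dom"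
  shows "pt_act \<sigma> (Some (e3 X, e3 Y)) = fmap p"
proof -
  have "fmap p = Some (e3 X1, e3 Y1)" using fmap_tab[OF assms(5)] assms(2) by simp
  moreover have "pt_act \<sigma> (Some (e3 X, e3 Y)) = Some (e3 X1, e3 Y1)"
    by (simp only: pt_act_def option.map prod.case assms(1) assms(3) assms(4))
  ultimately show ?thesis by simp
qed

definition XP :: q3 where "XP = (((0,(-1)),(0,0)),((0,0),(0,(-1))))"
definition YP :: q3 where "YP = (((0,2),(0,0)),((0,0),(1,1)))"
definition XQ :: q3 where "XQ = ((((-1),0),(1,0)),((0,0),(0,0)))"
definition YQ :: q3 where "YQ = (((0,0),(0,0)),(((-1),(-1)),(0,1)))"
lemma PpQp: "Pp = Some (e3 XP, e3 YP)" "Qp = Some (e3 XQ, e3 YQ)"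
  unfolding Pp_def Qp_def XP_def YP_def XQ_def YQ_def by (rule refl)+

lemma case_00: assumes "\<And>c. \<sigma> (e3 c) = e3 (kapp3 ((kR ^^ 0) ((kS ^^ 0) Ti)) ((kR ^^ 0) ((kS ^^ 0) Ts)) ((kR ^^ 0) ((kS ^^ 0) Ta)) c)"
  shows "acts_by \<sigma> Pp Qp (mm4 (mat2_mult (mat2_pow rho_r 0) (mat2_pow rho_s 0)))"
proof -
  have m: "mm4 (mat2_mult (mat2_pow rho_r 0) (mat2_pow rho_s 0)) = (1,0,0,1)"
    by (simp add: mat2_pow_def rho_r_def rho_s_def mat2_mult_def mat2_id_def numeral_eq_Suc)
  note defs = Ri_def Rs_def Ra_def Ti_def Ts_def Ta_def rc3_def numeral_eq_Suc XP_def YP_def XQ_def YQ_def Dom_def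
  have p1: "pt_act \<sigma> Pp = fmap (1,0)" unfolding PpQp(1) by (rule act_pt[OF assms tv10]) (simp_all add: defs)
  have p2: "pt_act \<sigma> Qp = fmap (0,1)" unfolding PpQp(2) by (rule act_pt[OF assms tv01]) (simp_all add: defs)
  show ?thesis unfolding m by (rule acts_fmap) (use p1 p2 in simp_all)
qed

lemma case_01: assumes "\<And>c. \<sigma> (e3 c) = e3 (kapp3 ((kR ^^ 0) ((kS ^^ 1) Ti)) ((kR ^^ 0) ((kS ^^ 1) Ts)) ((kR ^^ 0) ((kS ^^ 1) Ta)) c)"
  shows "acts_by \<sigma> Pp Qp (mm4 (mat2_mult (mat2_pow rho_r 0) (mat2_pow rho_s 1)))"
proof -
  have m: "mm4 (mat2_mult (mat2_pow rho_r 0) (mat2_pow rho_s 1)) = (3,2,2,3)"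
    by (simp add: mat2_pow_def rho_r_def rho_s_def mat2_mult_def mat2_id_def numeral_eq_Suc)
  note defs = Ri_def Rs_def Ra_def Ti_def Ts_def Ta_def rc3_def numeral_eq_Suc XP_def YP_def XQ_def YQ_def Dom_def
  have p1: "pt_act \<sigma> Pp = fmap (3,2)" unfolding PpQp(1) by (rule act_pt[OF assms tv32]) (simp_all add: defs)
  have p2: "pt_act \<sigma> Qp = fmap (2,3)" unfolding PpQp(2) by (rule act_pt[OF assms tv23]) (simp_all add: defs)
  show ?thesis unfolding m by (rule acts_fmap) (use p1 p2 in simp_all)
qed

lemma case_10: assumes "\<And>c. \<sigma> (e3 c) = e3 (kapp3 ((kR ^^ 1) ((kS ^^ 0) Ti)) ((kR ^^ 1) ((kS ^^ 0) Ts)) ((kR ^^ 1) ((kS ^^ 0) Ta)) c)"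
  shows "acts_by \<sigma> Pp Qp (mm4 (mat2_mult (mat2_pow rho_r 1) (mat2_pow rho_s 0)))"
proof -
  have m: "mm4 (mat2_mult (mat2_pow rho_r 1) (mat2_pow rho_s 0)) = (1,2,1,1)"
    by (simp add: mat2_pow_def rho_r_def rho_s_def mat2_mult_def mat2_id_def numeral_eq_Suc)
  note defs = Ri_def Rs_def Ra_def Ti_def Ts_def Ta_def rc3_def numeral_eq_Suc XP_def YP_def XQ_def YQ_def Dom_def
  have p1: "pt_act \<sigma> Pp = fmap (1,1)" unfolding PpQp(1) by (rule act_pt[OF assms tv11]) (simp_all add: defs)
  have p2: "pt_act \<sigma> Qp = fmap (2,1)" unfolding PpQp(2) by (rule act_pt[OF assms tv21]) (simp_all add: defs)
  show ?thesis unfolding m by (rule acts_fmap) (use p1 p2 in simp_all)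
qed

lemma case_11: assumes "\<And>c. \<sigma> (e3 c) = e3 (kapp3 ((kR ^^ 1) ((kS ^^ 1) Ti)) ((kR ^^ 1) ((kS ^^ 1) Ts)) ((kR ^^ 1) ((kS ^^ 1) Ta)) c)"
  shows "acts_by \<sigma> Pp Qp (mm4 (mat2_mult (mat2_pow rho_r 1) (mat2_pow rho_s 1)))"
proof -
  have m: "mm4 (mat2_mult (mat2_pow rho_r 1) (mat2_pow rho_s 1)) = (3,0,1,1)"
    by (simp add: mat2_pow_def rho_r_def rho_s_def mat2_mult_def mat2_id_def numeral_eq_Suc)
  note defs = Ri_def Rs_def Ra_def Ti_def Ts_def Ta_def rc3_def numeral_eq_Suc XP_def YP_def XQ_def YQ_def Dom_def
  have p1: "pt_act \<sigma> Pp = fmap (3,1)" unfolding PpQp(1) by (rule act_pt[OF assms tv31]) (simp_all add: defs)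
  have p2: "pt_act \<sigma> Qp = fmap (0,1)" unfolding PpQp(2) by (rule act_pt[OF assms tv01]) (simp_all add: defs)
  show ?thesis unfolding m by (rule acts_fmap) (use p1 p2 in simp_all)
qed

lemma case_20: assumes "\<And>c. \<sigma> (e3 c) = e3 (kapp3 ((kR ^^ 2) ((kS ^^ 0) Ti)) ((kR ^^ 2) ((kS ^^ 0) Ts)) ((kR ^^ 2) ((kS ^^ 0) Ta)) c)"
  shows "acts_by \<sigma> Pp Qp (mm4 (mat2_mult (mat2_pow rho_r 2) (mat2_pow rho_s 0)))"
proof -
  have m: "mm4 (mat2_mult (mat2_pow rho_r 2) (mat2_pow rho_s 0)) = (3,0,2,3)"
    by (simp add: mat2_pow_def rho_r_def rho_s_def mat2_mult_def mat2_id_def numeral_eq_Suc)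
  note defs = Ri_def Rs_def Ra_def Ti_def Ts_def Ta_def rc3_def numeral_eq_Suc XP_def YP_def XQ_def YQ_def Dom_def
  have p1: "pt_act \<sigma> Pp = fmap (3,2)" unfolding PpQp(1) by (rule act_pt[OF assms tv32]) (simp_all add: defs)
  have p2: "pt_act \<sigma> Qp = fmap (0,3)" unfolding PpQp(2) by (rule act_pt[OF assms tv03]) (simp_all add: defs)
  show ?thesis unfolding m by (rule acts_fmap) (use p1 p2 in simp_all)
qed

lemma case_21: assumes "\<And>c. \<sigma> (e3 c) = e3 (kapp3 ((kR ^^ 2) ((kS ^^ 1) Ti)) ((kR ^^ 2) ((kS ^^ 1) Ts)) ((kR ^^ 2) ((kS ^^ 1) Ta)) c)"
  shows "acts_by \<sigma> Pp Qp (mm4 (mat2_mult (mat2_pow rho_r 2) (mat2_pow rho_s 1)))"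
proof -
  have m: "mm4 (mat2_mult (mat2_pow rho_r 2) (mat2_pow rho_s 1)) = (1,2,0,1)"
    by (simp add: mat2_pow_def rho_r_def rho_s_def mat2_mult_def mat2_id_def numeral_eq_Suc)
  note defs = Ri_def Rs_def Ra_def Ti_def Ts_def Ta_def rc3_def numeral_eq_Suc XP_def YP_def XQ_def YQ_def Dom_def
  have p1: "pt_act \<sigma> Pp = fmap (1,0)" unfolding PpQp(1) by (rule act_pt[OF assms tv10]) (simp_all add: defs)
  have p2: "pt_act \<sigma> Qp = fmap (2,1)" unfolding PpQp(2) by (rule act_pt[OF assms tv21]) (simp_all add: defs)
  show ?thesis unfolding m by (rule acts_fmap) (use p1 p2 in simp_all)
qed

lemma case_30: assumes "\<And>c. \<sigma> (e3 c) = e3 (kapp3 ((kR ^^ 3) ((kS ^^ 0) Ti)) ((kR ^^ 3) ((kS ^^ 0) Ts)) ((kR ^^ 3) ((kS ^^ 0) Ta)) c)"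
  shows "acts_by \<sigma> Pp Qp (mm4 (mat2_mult (mat2_pow rho_r 3) (mat2_pow rho_s 0)))"
proof -
  have m: "mm4 (mat2_mult (mat2_pow rho_r 3) (mat2_pow rho_s 0)) = (3,2,1,3)"
    by (simp add: mat2_pow_def rho_r_def rho_s_def mat2_mult_def mat2_id_def numeral_eq_Suc)
  note defs = Ri_def Rs_def Ra_def Ti_def Ts_def Ta_def rc3_def numeral_eq_Suc XP_def YP_def XQ_def YQ_def Dom_def
  have p1: "pt_act \<sigma> Pp = fmap (3,1)" unfolding PpQp(1) by (rule act_pt[OF assms tv31]) (simp_all add: defs)
  have p2: "pt_act \<sigma> Qp = fmap (2,3)" unfolding PpQp(2) by (rule act_pt[OF assms tv23]) (simp_all add: defs)
  show ?thesis unfolding m by (rule acts_fmap) (use p1 p2 in simp_all)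
qed

lemma case_31: assumes "\<And>c. \<sigma> (e3 c) = e3 (kapp3 ((kR ^^ 3) ((kS ^^ 1) Ti)) ((kR ^^ 3) ((kS ^^ 1) Ts)) ((kR ^^ 3) ((kS ^^ 1) Ta)) c)"
  shows "acts_by \<sigma> Pp Qp (mm4 (mat2_mult (mat2_pow rho_r 3) (mat2_pow rho_s 1)))"
proof -
  have m: "mm4 (mat2_mult (mat2_pow rho_r 3) (mat2_pow rho_s 1)) = (1,0,1,3)"
    by (simp add: mat2_pow_def rho_r_def rho_s_def mat2_mult_def mat2_id_def numeral_eq_Suc)
  note defs = Ri_def Rs_def Ra_def Ti_def Ts_def Ta_def rc3_def numeral_eq_Suc XP_def YP_def XQ_def YQ_def Dom_def
  have p1: "pt_act \<sigma> Pp = fmap (1,1)" unfolding PpQp(1) by (rule act_pt[OF assms tv11]) (simp_all add: defs)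
  have p2: "pt_act \<sigma> Qp = fmap (0,3)" unfolding PpQp(2) by (rule act_pt[OF assms tv03]) (simp_all add: defs)
  show ?thesis unfolding m by (rule acts_fmap) (use p1 p2 in simp_all)
qed


lemma part3:
  assumes rs: "D4_gens r s" and sg: "Qbar_aut \<sigma>" and ag: "\<forall>z\<in>K. \<sigma> z = ((r ^^ a) \<circ> (s ^^ b)) z"
  shows "acts_by \<sigma> Pp Qp (mat2_mult (mat2_pow rho_r a) (mat2_pow rho_s b))"
proof -
  note defs = Ri_def Rs_def Ra_def Ti_def Ts_def Ta_def rc3_def numeral_eq_Suc
  have sT: "\<sigma> (e3 T) = e3 ((kR ^^ a) ((kS ^^ b) T))" for T
  proof -
    have z: "e3 T \<in> K" unfolding K_eq K3_def by (rule rangeI)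
    have "\<sigma> (e3 T) = ((r ^^ a) \<circ> (s ^^ b)) (e3 T)" using ag z by blast
    also have "\<dots> = (r0 ^^ a) ((s0 ^^ b) (e3 T))" by (rule D4_iter[OF rs z])
    also have "\<dots> = e3 ((kR ^^ a) ((kS ^^ b) T))" by (simp only: s0_iter r0_iter)
    finally show ?thesis .
  qed
  have pS: "(kS ^^ b) T = (kS ^^ (b mod 2)) T" if "T \<in> {Ti, Ts, Ta}" for T
    by (rule funpow_period) (use that in \<open>auto simp: defs\<close>)
  have pR: "(kR ^^ a) ((kS ^^ j) T) = (kR ^^ (a mod 4)) ((kS ^^ j) T)" if "T \<in> {Ti, Ts, Ta}" "j < 2" for T j
  proof (rule funpow_period)
    have "j = 0 \<or> j = 1" using that(2) by auto
    thus "(kR ^^ 4) ((kS ^^ j) T) = (kS ^^ j) T" using that(1) by (auto simp: defs)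
  qed
  have bm: "b mod 2 < 2" by simp
  have G: "\<sigma> (e3 T) = e3 ((kR ^^ (a mod 4)) ((kS ^^ (b mod 2)) T))" if "T \<in> {Ti, Ts, Ta}" for T
    unfolding sT pS[OF that] pR[OF that bm] ..
  have se: "\<And>c. \<sigma> (e3 c) = e3 (kapp3 ((kR ^^ (a mod 4)) ((kS ^^ (b mod 2)) Ti))
       ((kR ^^ (a mod 4)) ((kS ^^ (b mod 2)) Ts)) ((kR ^^ (a mod 4)) ((kS ^^ (b mod 2)) Ta)) c)"
  proof -
    have m: "Ti \<in> {Ti,Ts,Ta}" "Ts \<in> {Ti,Ts,Ta}" "Ta \<in> {Ti,Ts,Ta}" by simp_all
    have gi: "\<sigma> \<i> = e3 ((kR ^^ (a mod 4)) ((kS ^^ (b mod 2)) Ti))" using G[OF m(1)] unfolding gens_e3(1) .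
    have gs: "\<sigma> sqrt2 = e3 ((kR ^^ (a mod 4)) ((kS ^^ (b mod 2)) Ts))" using G[OF m(2)] unfolding gens_e3(2) .
    have ga: "\<sigma> alpha = e3 ((kR ^^ (a mod 4)) ((kS ^^ (b mod 2)) Ta))" using G[OF m(3)] unfolding gens_e3(3) .
    fix c show "\<sigma> (e3 c) = e3 (kapp3 ((kR ^^ (a mod 4)) ((kS ^^ (b mod 2)) Ti))
       ((kR ^^ (a mod 4)) ((kS ^^ (b mod 2)) Ts)) ((kR ^^ (a mod 4)) ((kS ^^ (b mod 2)) Ta)) c)"
      unfolding sigma_basic(1)[OF sg] gi gs ga by (rule kapp3_e3)
  qed
  have am: "a mod 4 = 0 \<or> a mod 4 = 1 \<or> a mod 4 = 2 \<or> a mod 4 = 3" by auto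
  have bm2: "b mod 2 = 0 \<or> b mod 2 = 1" by auto
  have goal: "acts_by \<sigma> Pp Qp (mm4 (mat2_mult (mat2_pow rho_r (a mod 4)) (mat2_pow rho_s (b mod 2))))"
    using am bm2
  proof (elim disjE)
    assume h1: "a mod 4 = 0" and h2: "b mod 2 = 0"
    show ?thesis unfolding h1 h2 by (rule case_00[OF se[unfolded h1 h2]])
  next
    assume h1: "a mod 4 = 0" and h2: "b mod 2 = 1"
    show ?thesis unfolding h1 h2 by (rule case_01[OF se[unfolded h1 h2]])
  next
    assume h1: "a mod 4 = 1" and h2: "b mod 2 = 0"
    show ?thesis unfolding h1 h2 by (rule case_10[OF se[unfolded h1 h2]])
  next
    assume h1: "a mod 4 = 1" and h2: "b mod 2 = 1"
    show ?thesis unfolding h1 h2 by (rule case_11[OF se[unfolded h1 h2]])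
  next
    assume h1: "a mod 4 = 2" and h2: "b mod 2 = 0"
    show ?thesis unfolding h1 h2 by (rule case_20[OF se[unfolded h1 h2]])
  next
    assume h1: "a mod 4 = 2" and h2: "b mod 2 = 1"
    show ?thesis unfolding h1 h2 by (rule case_21[OF se[unfolded h1 h2]])
  next
    assume h1: "a mod 4 = 3" and h2: "b mod 2 = 0"
    show ?thesis unfolding h1 h2 by (rule case_30[OF se[unfolded h1 h2]])
  next
    assume h1: "a mod 4 = 3" and h2: "b mod 2 = 1"
    show ?thesis unfolding h1 h2 by (rule case_31[OF se[unfolded h1 h2]])
  qed
  have "acts_by \<sigma> Pp Qp (mat2_mult (mat2_pow rho_r a) (mat2_pow rho_s b))
      = acts_by \<sigma> Pp Qp (mm4 (mat2_mult (mat2_pow rho_r a) (mat2_pow rho_s b)))" by (rule acts_by_mm4)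
  also have "\<dots> = acts_by \<sigma> Pp Qp (mm4 (mat2_mult (mat2_pow rho_r (a mod 4)) (mat2_pow rho_s (b mod 2))))"
    by (simp only: mat_red[of a b])
  finally show ?thesis using goal by simp
qed

theorem proposition3p9:
  shows "(\<exists>r s. D4_gens r s) \<and>
    (\<forall>r s. D4_gens r s \<longrightarrow>
       (\<forall>\<sigma>. Qbar_aut \<sigma> \<longrightarrow>
          (\<exists>a<4. \<exists>b<2. \<forall>z\<in>K. \<sigma> z = ((r ^^ a) \<circ> (s ^^ b)) z))) \<and>
    (\<exists>P Q. E4_basis P Q \<and>
       (\<forall>r s. D4_gens r s \<longrightarrow>
          (\<forall>\<sigma> a b. Qbar_aut \<sigma> \<longrightarrow>
             (\<forall>z\<in>K. \<sigma> z = ((r ^^ a) \<circ> (s ^^ b)) z) \<longrightarrow>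
             acts_by \<sigma> P Q (mat2_mult (mat2_pow rho_r a) (mat2_pow rho_s b)))))"
proof (intro conjI)
  show "\<exists>r s. D4_gens r s" using D4_r0s0 by blast
  show "\<forall>r s. D4_gens r s \<longrightarrow> (\<forall>\<sigma>. Qbar_aut \<sigma> \<longrightarrow> (\<exists>a<4. \<exists>b<2. \<forall>z\<in>K. \<sigma> z = ((r ^^ a) \<circ> (s ^^ b)) z))"
    using part2 by blast
  show "\<exists>P Q. E4_basis P Q \<and>
       (\<forall>r s. D4_gens r s \<longrightarrow>
          (\<forall>\<sigma> a b. Qbar_aut \<sigma> \<longrightarrow>
             (\<forall>z\<in>K. \<sigma> z = ((r ^^ a) \<circ> (s ^^ b)) z) \<longrightarrow>
             acts_by \<sigma> P Q (mat2_mult (mat2_pow rho_r a) (mat2_pow rho_s b))))"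
  proof (rule exI[of _ Pp], rule exI[of _ Qp], intro conjI allI impI)
    show "E4_basis Pp Qp" by (rule basis)
  next
    fix r s \<sigma> a b assume "D4_gens r s" "Qbar_aut \<sigma>" "\<forall>z\<in>K. \<sigma> z = ((r ^^ a) \<circ> (s ^^ b)) z"
    thus "acts_by \<sigma> Pp Qp (mat2_mult (mat2_pow rho_r a) (mat2_pow rho_s b))" by (rule part3)
  qed
qed


end
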